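(* Let $a$ be a complex number of modulus one and let $H$ be a $6\times 6$ complex Hadamard matrix all of whose entries lie in $\{1,a,\bar a\}$. Then $H$ is complex equivalent to the Tao matrix $S_6^{(0)}$ or to the matrix $H^{(1)}$, where, with $\omega=e^{2\pi i/3}$, $$S_6^{(0)}=\begin{bmatrix} 1&1&1&1&1&1\\ 1&1&\omega&\omega&\omega^2&\omega^2\\ 1&\omega&1&\omega^2&\omega^2&\omega\\ 1&\omega&\omega^2&1&\omega&\omega^2\\ 1&\omega^2&\omega^2&\omega&1&\omega\\ 1&\omega^2&\omega&\omega^2&\omega&1 \end{bmatrix},\qquad H^{(1)}=\begin{bmatrix} i&1&1&1&1&1\\ 1&i&1&1&-1&-1\\ 1&1&i&-1&1&-1\\ 1&1&-1&i&-1&1\\ 1&-1&1&-1&i&1\\ 1&-1&-1&1&1&i \end{bmatrix}.$$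
   Context: A complex Hadamard matrix (CHM) of order $n$ is an $n\times n$ complex matrix $H$ all of whose entries have modulus one and which satisfies $HH^\dagger=nI$. A monomial unitary matrix is a unitary matrix each of whose rows and columns has exactly one nonzero entry, that entry having modulus one. Two $n\times n$ matrices $U,V$ are complex equivalent if $U=PVQ$ for some $n\times n$ monomial unitary matrices $P,Q$. *)

theory Defs
  imports Complex_Main
begin

text \<open>Square n x n complex matrices are represented as functions
  nat => nat => complex; only entries with indices i, j < n matter.\<close>

definition is_CHM :: "nat \<Rightarrow> (nat \<Rightarrow> nat \<Rightarrow> complex) \<Rightarrow> bool" where
  "is_CHM n H \<longleftrightarrow>
     (\<forall>i<n. \<forall>j<n. cmod (H i j) = 1) \<and>
     (\<forall>i<n. \<forall>j<n. (\<Sum>k<n. H i k * cnj (H j k)) = (if i = j then of_nat n else 0))"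

definition is_unitary :: "nat \<Rightarrow> (nat \<Rightarrow> nat \<Rightarrow> complex) \<Rightarrow> bool" where
  "is_unitary n U \<longleftrightarrow>
     (\<forall>i<n. \<forall>j<n. (\<Sum>k<n. U i k * cnj (U j k)) = (if i = j then 1 else 0))"

definition monomial_unitary :: "nat \<Rightarrow> (nat \<Rightarrow> nat \<Rightarrow> complex) \<Rightarrow> bool" where
  "monomial_unitary n P \<longleftrightarrow>
     is_unitary n P \<and>
     (\<forall>i<n. \<exists>!j. j < n \<and> P i j \<noteq> 0) \<and>
     (\<forall>j<n. \<exists>!i. i < n \<and> P i j \<noteq> 0) \<and>
     (\<forall>i<n. \<forall>j<n. P i j \<noteq> 0 \<longrightarrow> cmod (P i j) = 1)"

definition mat_mult :: "nat \<Rightarrow> (nat \<Rightarrow> nat \<Rightarrow> complex) \<Rightarrow> (nat \<Rightarrow> nat \<Rightarrow> complex)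
    \<Rightarrow> (nat \<Rightarrow> nat \<Rightarrow> complex)" where
  "mat_mult n A B = (\<lambda>i j. \<Sum>k<n. A i k * B k j)"

definition complex_equiv :: "nat \<Rightarrow> (nat \<Rightarrow> nat \<Rightarrow> complex) \<Rightarrow> (nat \<Rightarrow> nat \<Rightarrow> complex) \<Rightarrow> bool" where
  "complex_equiv n U V \<longleftrightarrow>
     (\<exists>P Q. monomial_unitary n P \<and> monomial_unitary n Q \<and>
        (\<forall>i<n. \<forall>j<n. U i j = mat_mult n (mat_mult n P V) Q i j))"

definition omega3 :: complex where
  "omega3 = cis (2 * pi / 3)"

definition tao_exp :: "nat list list" where
  "tao_exp = [[0,0,0,0,0,0],
              [0,0,1,1,2,2],
              [0,1,0,2,2,1],
              [0,1,2,0,1,2],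
              [0,2,2,1,0,1],
              [0,2,1,2,1,0]]"

definition S6_0 :: "nat \<Rightarrow> nat \<Rightarrow> complex" where
  "S6_0 i j = omega3 ^ (tao_exp ! i ! j)"

definition H1_list :: "complex list list" where
  "H1_list = [[\<i>,1,1,1,1,1],
              [1,\<i>,1,1,-1,-1],
              [1,1,\<i>,-1,1,-1],
              [1,1,-1,\<i>,-1,1],
              [1,-1,1,-1,\<i>,1],
              [1,-1,-1,1,1,\<i>]]"

definition H1 :: "nat \<Rightarrow> nat \<Rightarrow> complex" where
  "H1 i j = H1_list ! i ! j"

end

theory Submission
  imports Defs "HOL-Combinatorics.Permutations"
begin

lemma mono_P:
  assumes s: "\<sigma> permutes {..<n}" and d: "\<forall>i<n. cmod (d i) = 1"
  shows "monomial_unitary n (\<lambda>i k. if k = \<sigma> i then d i else 0)"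
proof -
  have sl: "\<And>i. i < n \<Longrightarrow> \<sigma> i < n" using permutes_in_image[OF s] by auto
  have inj: "\<And>i j. \<sigma> i = \<sigma> j \<Longrightarrow> i = j" using permutes_inj[OF s] by (auto dest: injD)
  have dd: "\<And>i. i < n \<Longrightarrow> d i * cnj (d i) = 1"
  proof -
    fix i assume "i < n" then have "cmod (d i) = 1" using d by simp
    then show "d i * cnj (d i) = 1" using complex_norm_square[of "d i", symmetric] by simp
  qed
  have dnz: "\<And>i. i < n \<Longrightarrow> d i \<noteq> 0"
  proof -
    fix i assume "i < n" then have "cmod (d i) = 1" using d by simp
    then show "d i \<noteq> 0" by auto
  qed
  have U: "is_unitary n (\<lambda>i k. if k = \<sigma> i then d i else 0)"
    unfolding is_unitary_def
  proof (intro allI impI)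
    fix i j assume i: "i < n" and j: "j < n"
    have "(\<Sum>k<n. (if k = \<sigma> i then d i else 0) * cnj (if k = \<sigma> j then d j else 0))
        = (\<Sum>k<n. if k = \<sigma> i then (if \<sigma> i = \<sigma> j then d i * cnj (d j) else 0) else 0)"
      by (rule sum.cong) auto
    also have "\<dots> = (if \<sigma> i = \<sigma> j then d i * cnj (d j) else 0)"
      using sl[OF i] by (simp add: sum.delta)
    also have "\<dots> = (if i = j then 1 else 0)"
    proof -
      have "(\<sigma> i = \<sigma> j) = (i = j)" using inj by blast
      then show ?thesis using dd[OF i] by (cases "i = j") simp_all
    qed
    finally show "(\<Sum>k<n. (if k = \<sigma> i then d i else 0) * cnj (if k = \<sigma> j then d j else 0)) = (if i = j then 1 else 0)" .
  qed
  have R: "\<forall>i<n. \<exists>!j. j < n \<and> (if j = \<sigma> i then d i else 0) \<noteq> 0"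
  proof (intro allI impI)
    fix i assume i: "i < n"
    show "\<exists>!j. j < n \<and> (if j = \<sigma> i then d i else 0) \<noteq> 0"
      by (rule ex1I[of _ "\<sigma> i"]) (use sl[OF i] dnz[OF i] in \<open>auto split: if_splits\<close>)
  qed
  have C: "\<forall>j<n. \<exists>!i. i < n \<and> (if j = \<sigma> i then d i else 0) \<noteq> 0"
  proof (intro allI impI)
    fix j assume j: "j < n"
    let ?i = "inv \<sigma> j"
    have "?i < n" using permutes_in_image[OF permutes_inv[OF s]] j by simp
    moreover have "\<sigma> ?i = j" using permutes_inverses(1)[OF s] by simp
    ultimately have a: "?i < n" "\<sigma> ?i = j" by auto
    show "\<exists>!i. i < n \<and> (if j = \<sigma> i then d i else 0) \<noteq> 0"
    proof (rule ex1I[of _ ?i])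
      show "?i < n \<and> (if j = \<sigma> ?i then d ?i else 0) \<noteq> 0" using a dnz[OF a(1)] by simp
      fix y assume "y < n \<and> (if j = \<sigma> y then d y else 0) \<noteq> 0"
      then have "\<sigma> y = \<sigma> ?i" using a by (simp split: if_splits)
      then show "y = ?i" by (rule inj)
    qed
  qed
  have M: "\<forall>i<n. \<forall>j<n. (if j = \<sigma> i then d i else 0) \<noteq> 0 \<longrightarrow> cmod (if j = \<sigma> i then d i else 0) = 1"
    using d by simp
  show ?thesis unfolding monomial_unitary_def by (rule conjI[OF U conjI[OF R conjI[OF C M]]])
qed

lemma mono_Q:
  assumes s: "\<rho> permutes {..<n}" and f: "\<forall>j<n. cmod (f j) = 1"
  shows "monomial_unitary n (\<lambda>l j. if l = \<rho> j then f j else 0)"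
proof -
  have sl: "\<And>i. i < n \<Longrightarrow> \<rho> i < n" using permutes_in_image[OF s] by auto
  have inj: "\<And>i j. \<rho> i = \<rho> j \<Longrightarrow> i = j" using permutes_inj[OF s] by (auto dest: injD)
  have ff: "\<And>i. i < n \<Longrightarrow> f i * cnj (f i) = 1"
  proof -
    fix i assume "i < n" then have "cmod (f i) = 1" using f by simp
    then show "f i * cnj (f i) = 1" using complex_norm_square[of "f i", symmetric] by simp
  qed
  have fnz: "\<And>i. i < n \<Longrightarrow> f i \<noteq> 0"
  proof -
    fix i assume "i < n" then have "cmod (f i) = 1" using f by simp
    then show "f i \<noteq> 0" by auto
  qed
  have rl: "\<And>i. i < n \<Longrightarrow> \<rho> i < n" using sl .
  have U: "is_unitary n (\<lambda>l j. if l = \<rho> j then f j else 0)"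
    unfolding is_unitary_def
  proof (intro allI impI)
    fix i j assume i: "i < n" and j: "j < n"
    have "(\<Sum>k<n. (if i = \<rho> k then f k else 0) * cnj (if j = \<rho> k then f k else 0))
        = (\<Sum>k<n. (\<lambda>x. if x = i then (if i = j then 1 else 0) else 0) (\<rho> k))"
      by (rule sum.cong) (auto simp: ff)
    also have "\<dots> = (\<Sum>k<n. (if k = i then (if i = j then 1 else 0) else 0))"
      using sum.permute[OF s, of "\<lambda>x. if x = i then (if i = j then 1 else 0) else (0::complex)"]
      by (simp add: comp_def)
    also have "\<dots> = (if i = j then 1 else 0)" using i by (simp add: sum.delta)
    finally show "(\<Sum>k<n. (if i = \<rho> k then f k else 0) * cnj (if j = \<rho> k then f k else 0)) = (if i = j then 1 else 0)" .
  qed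
  have R: "\<forall>i<n. \<exists>!j. j < n \<and> (if i = \<rho> j then f j else 0) \<noteq> 0"
  proof (intro allI impI)
    fix i assume i: "i < n"
    let ?j = "inv \<rho> i"
    have "?j < n" using permutes_in_image[OF permutes_inv[OF s]] i by simp
    moreover have "\<rho> ?j = i" using permutes_inverses(1)[OF s] by simp
    ultimately have a: "?j < n" "\<rho> ?j = i" by auto
    show "\<exists>!j. j < n \<and> (if i = \<rho> j then f j else 0) \<noteq> 0"
    proof (rule ex1I[of _ ?j])
      show "?j < n \<and> (if i = \<rho> ?j then f ?j else 0) \<noteq> 0" using a fnz[OF a(1)] by simp
      fix y assume "y < n \<and> (if i = \<rho> y then f y else 0) \<noteq> 0"
      then have "\<rho> y = \<rho> ?j" using a by (simp split: if_splits)
      then show "y = ?j" by (rule inj)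
    qed
  qed
  have C: "\<forall>j<n. \<exists>!i. i < n \<and> (if i = \<rho> j then f j else 0) \<noteq> 0"
  proof (intro allI impI)
    fix j assume j: "j < n"
    show "\<exists>!i. i < n \<and> (if i = \<rho> j then f j else 0) \<noteq> 0"
      by (rule ex1I[of _ "\<rho> j"]) (use rl[OF j] fnz[OF j] in \<open>auto split: if_splits\<close>)
  qed
  have M: "\<forall>i<n. \<forall>j<n. (if i = \<rho> j then f j else 0) \<noteq> 0 \<longrightarrow> cmod (if i = \<rho> j then f j else 0) = 1"
    using f by simp
  show ?thesis unfolding monomial_unitary_def by (rule conjI[OF U conjI[OF R conjI[OF C M]]])
qed

lemma equiv_from:
  assumes s: "\<sigma> permutes {..<n}" and r: "\<rho> permutes {..<n}"
    and d: "\<forall>i<n. cmod (d i) = 1" and f: "\<forall>j<n. cmod (f j) = 1"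
    and H: "\<forall>i<n. \<forall>j<n. H i j = d i * f j * V (\<sigma> i) (\<rho> j)"
  shows "complex_equiv n H V"
proof -
  let ?P = "\<lambda>i k. if k = \<sigma> i then d i else 0"
  let ?Q = "\<lambda>l j. if l = \<rho> j then f j else 0"
  have sl: "\<And>i. i < n \<Longrightarrow> \<sigma> i < n" using permutes_in_image[OF s] by auto
  have rl: "\<And>i. i < n \<Longrightarrow> \<rho> i < n" using permutes_in_image[OF r] by auto
  have "\<forall>i<n. \<forall>j<n. H i j = mat_mult n (mat_mult n ?P V) ?Q i j"
  proof (intro allI impI)
    fix i j assume i: "i < n" and j: "j < n"
    have m1: "\<And>l. mat_mult n ?P V i l = d i * V (\<sigma> i) l"
    proof -
      fix l
      have "mat_mult n ?P V i l = (\<Sum>k<n. if k = \<sigma> i then d i * V k l else 0)"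
        unfolding mat_mult_def by (rule sum.cong) auto
      also have "\<dots> = d i * V (\<sigma> i) l" using sl[OF i] by (simp add: sum.delta)
      finally show "mat_mult n ?P V i l = d i * V (\<sigma> i) l" .
    qed
    have "mat_mult n (mat_mult n ?P V) ?Q i j = (\<Sum>l<n. if l = \<rho> j then d i * V (\<sigma> i) l * f j else 0)"
      unfolding mat_mult_def[of n "mat_mult n ?P V"] m1 by (rule sum.cong) auto
    also have "\<dots> = d i * f j * V (\<sigma> i) (\<rho> j)" using rl[OF j] by (simp add: sum.delta)
    finally show "H i j = mat_mult n (mat_mult n ?P V) ?Q i j" using H i j by simp
  qed
  thus ?thesis unfolding complex_equiv_def using mono_P[OF s d] mono_Q[OF r f] by blast
qed

definition Ez :: "complex \<Rightarrow> int \<Rightarrow> int \<Rightarrow> complex" where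
  "Ez g m x = g ^ nat (x mod m)"

lemma pow_mod_red:
  assumes g: "g ^ nat m = (1::complex)" and m: "m > 0"
  shows "g ^ n = g ^ (n mod nat m)"
proof -
  have "g ^ n = g ^ (nat m * (n div nat m) + n mod nat m)" by simp
  also have "\<dots> = (g ^ nat m) ^ (n div nat m) * g ^ (n mod nat m)"
    by (simp only: power_add power_mult)
  finally show ?thesis using g by simp
qed

lemma Ez_add:
  assumes g: "g ^ nat m = 1" and m: "m > 0"
  shows "Ez g m (x + y) = Ez g m x * Ez g m y"
proof -
  let ?A = "nat (x mod m) + nat (y mod m)"
  have iA: "int ?A = x mod m + y mod m" using m by simp
  have "int (?A mod nat m) = (x mod m + y mod m) mod m" using m iA by (simp add: zmod_int)
  also have "\<dots> = (x + y) mod m" by (simp add: mod_add_eq)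
  finally have "?A mod nat m = nat ((x + y) mod m)" by linarith
  then have "nat ((x + y) mod m) = ?A mod nat m" by simp
  then have "Ez g m (x + y) = g ^ (?A mod nat m)" unfolding Ez_def by simp
  also have "\<dots> = g ^ ?A" using pow_mod_red[OF g m, of ?A] by simp
  also have "\<dots> = Ez g m x * Ez g m y" unfolding Ez_def by (simp add: power_add)
  finally show ?thesis .
qed

lemma Ez_zero: "Ez g m 0 = 1" unfolding Ez_def by simp

lemma Ez_norm: "cmod g = 1 \<Longrightarrow> cmod (Ez g m x) = 1"
  unfolding Ez_def by (simp add: norm_power)

lemma Ez_cnj:
  assumes g: "g ^ nat m = 1" and m: "m > 0" and n: "cmod g = 1"
  shows "cnj (Ez g m x) = Ez g m (- x)"
proof -
  have p: "Ez g m x * Ez g m (-x) = 1" using Ez_add[OF g m, of x "-x"] Ez_zero by simp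
  have q: "Ez g m x * cnj (Ez g m x) = 1"
    using complex_norm_square[of "Ez g m x", symmetric] Ez_norm[OF n] by simp
  have nz: "Ez g m x \<noteq> 0" using p by auto
  from p q have "Ez g m x * cnj (Ez g m x) = Ez g m x * Ez g m (-x)" by simp
  then show ?thesis using nz by simp
qed

lemma Ez_cong: "x mod m = y mod m \<Longrightarrow> Ez g m x = Ez g m y"
  unfolding Ez_def by simp

definition orthz :: "complex \<Rightarrow> int \<Rightarrow> (nat \<Rightarrow> nat \<Rightarrow> int) \<Rightarrow> bool" where
  "orthz g m X \<longleftrightarrow> (\<forall>i<6. \<forall>j<6. i \<noteq> j \<longrightarrow> (\<Sum>k<6. Ez g m (X i k - X j k)) = 0)"

definition Rel :: "int \<Rightarrow> (nat \<Rightarrow> nat \<Rightarrow> int) \<Rightarrow> (nat \<Rightarrow> nat \<Rightarrow> int) \<Rightarrow> bool" where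
  "Rel m X Y \<longleftrightarrow> (\<exists>\<sigma> \<rho> \<delta> \<epsilon>. \<sigma> permutes {..<6} \<and> \<rho> permutes {..<6} \<and>
     (\<forall>i<6. \<forall>j<6. Y i j mod m = (\<delta> i + \<epsilon> j + X (\<sigma> i) (\<rho> j)) mod m))"

lemma perm_lt: "p permutes {..<n} \<Longrightarrow> i < n \<Longrightarrow> p i < n"
  using permutes_in_image by fastforce

lemma Rel_trans:
  assumes "Rel m X Y" "Rel m Y Z" shows "Rel m X Z"
proof -
  obtain \<sigma>1 \<rho>1 \<delta>1 \<epsilon>1 where a: "\<sigma>1 permutes {..<6}" "\<rho>1 permutes {..<6}"
    "\<forall>i<6. \<forall>j<6. Y i j mod m = (\<delta>1 i + \<epsilon>1 j + X (\<sigma>1 i) (\<rho>1 j)) mod m"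
    using assms(1) unfolding Rel_def by blast
  obtain \<sigma>2 \<rho>2 \<delta>2 \<epsilon>2 where b: "\<sigma>2 permutes {..<6}" "\<rho>2 permutes {..<6}"
    "\<forall>i<6. \<forall>j<6. Z i j mod m = (\<delta>2 i + \<epsilon>2 j + Y (\<sigma>2 i) (\<rho>2 j)) mod m"
    using assms(2) unfolding Rel_def by blast
  have h: "\<forall>i<6. \<forall>j<6. Z i j mod m = ((\<lambda>i. \<delta>2 i + \<delta>1 (\<sigma>2 i)) i + (\<lambda>j. \<epsilon>2 j + \<epsilon>1 (\<rho>2 j)) j + X ((\<sigma>1 \<circ> \<sigma>2) i) ((\<rho>1 \<circ> \<rho>2) j)) mod m"
  proof (intro allI impI)
    fix i j :: nat assume i: "i < 6" and j: "j < 6"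
    have "Z i j mod m = (\<delta>2 i + \<epsilon>2 j + Y (\<sigma>2 i) (\<rho>2 j) mod m) mod m"
      using b(3) i j by (simp only: mod_add_right_eq)
    also have "Y (\<sigma>2 i) (\<rho>2 j) mod m = (\<delta>1 (\<sigma>2 i) + \<epsilon>1 (\<rho>2 j) + X (\<sigma>1 (\<sigma>2 i)) (\<rho>1 (\<rho>2 j))) mod m"
      using a(3) perm_lt[OF b(1) i] perm_lt[OF b(2) j] by blast
    also have "(\<delta>2 i + \<epsilon>2 j + (\<delta>1 (\<sigma>2 i) + \<epsilon>1 (\<rho>2 j) + X (\<sigma>1 (\<sigma>2 i)) (\<rho>1 (\<rho>2 j))) mod m) mod m
       = (\<delta>2 i + \<epsilon>2 j + (\<delta>1 (\<sigma>2 i) + \<epsilon>1 (\<rho>2 j) + X (\<sigma>1 (\<sigma>2 i)) (\<rho>1 (\<rho>2 j)))) mod m"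
      by (rule mod_add_right_eq)
    finally show "Z i j mod m = ((\<lambda>i. \<delta>2 i + \<delta>1 (\<sigma>2 i)) i + (\<lambda>j. \<epsilon>2 j + \<epsilon>1 (\<rho>2 j)) j + X ((\<sigma>1 \<circ> \<sigma>2) i) ((\<rho>1 \<circ> \<rho>2) j)) mod m"
      by (simp add: ac_simps)
  qed
  have pp: "\<sigma>1 \<circ> \<sigma>2 permutes {..<6}" "\<rho>1 \<circ> \<rho>2 permutes {..<6}"
    using a b by (simp_all add: permutes_compose)
  show ?thesis unfolding Rel_def
    apply (rule exI[of _ "\<sigma>1 \<circ> \<sigma>2"], rule exI[of _ "\<rho>1 \<circ> \<rho>2"], rule exI[of _ "\<lambda>i. \<delta>2 i + \<delta>1 (\<sigma>2 i)"], rule exI[of _ "\<lambda>j. \<epsilon>2 j + \<epsilon>1 (\<rho>2 j)"])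
    using pp h by simp
qed

lemma Rel_sym:
  assumes "Rel m X Y" shows "Rel m Y X"
proof -
  obtain \<sigma> \<rho> \<delta> \<epsilon> where a: "\<sigma> permutes {..<6}" "\<rho> permutes {..<6}"
    "\<forall>i<6. \<forall>j<6. Y i j mod m = (\<delta> i + \<epsilon> j + X (\<sigma> i) (\<rho> j)) mod m"
    using assms unfolding Rel_def by blast
  have si: "inv \<sigma> permutes {..<6}" "inv \<rho> permutes {..<6}" using a permutes_inv by blast+
  have h: "\<forall>i<6. \<forall>j<6. X i j mod m = ((\<lambda>i. - \<delta> (inv \<sigma> i)) i + (\<lambda>j. - \<epsilon> (inv \<rho> j)) j + Y (inv \<sigma> i) (inv \<rho> j)) mod m"
  proof (intro allI impI)
    fix i j :: nat assume i: "i < 6" and j: "j < 6"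
    have e: "\<sigma> (inv \<sigma> i) = i" "\<rho> (inv \<rho> j) = j" using permutes_inverses(1) a(1,2) by metis+
    have "(- \<delta> (inv \<sigma> i) + - \<epsilon> (inv \<rho> j) + Y (inv \<sigma> i) (inv \<rho> j)) mod m
        = (- \<delta> (inv \<sigma> i) + - \<epsilon> (inv \<rho> j) + Y (inv \<sigma> i) (inv \<rho> j) mod m) mod m"
      by (simp add: mod_add_right_eq)
    also have "Y (inv \<sigma> i) (inv \<rho> j) mod m = (\<delta> (inv \<sigma> i) + \<epsilon> (inv \<rho> j) + X i j) mod m"
      using a(3) perm_lt[OF si(1) i] perm_lt[OF si(2) j] e by metis
    finally show "X i j mod m = ((\<lambda>i. - \<delta> (inv \<sigma> i)) i + (\<lambda>j. - \<epsilon> (inv \<rho> j)) j + Y (inv \<sigma> i) (inv \<rho> j)) mod m"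
      by (simp add: mod_add_right_eq)
  qed
  show ?thesis unfolding Rel_def
    apply (rule exI[of _ "inv \<sigma>"], rule exI[of _ "inv \<rho>"], rule exI[of _ "\<lambda>i. - \<delta> (inv \<sigma> i)"], rule exI[of _ "\<lambda>j. - \<epsilon> (inv \<rho> j)"])
    using si h by simp
qed

lemma Rel_orth:
  assumes g: "g ^ nat m = 1" and m: "m > 0" and o: "orthz g m X" and r: "Rel m X Y"
  shows "orthz g m Y"
proof -
  obtain \<sigma> \<rho> \<delta> \<epsilon> where a: "\<sigma> permutes {..<6}" "\<rho> permutes {..<6}"
    "\<forall>i<6. \<forall>j<6. Y i j mod m = (\<delta> i + \<epsilon> j + X (\<sigma> i) (\<rho> j)) mod m"
    using r unfolding Rel_def by blast
  show ?thesis unfolding orthz_def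
  proof (intro allI impI)
    fix i j :: nat assume i: "i < 6" and j: "j < 6" and ij: "i \<noteq> j"
    have sij: "\<sigma> i \<noteq> \<sigma> j" using ij permutes_inj[OF a(1)] by (metis injD)
    have "\<And>k. k < 6 \<Longrightarrow> Ez g m (Y i k - Y j k) = Ez g m (\<delta> i - \<delta> j) * Ez g m (X (\<sigma> i) (\<rho> k) - X (\<sigma> j) (\<rho> k))"
    proof -
      fix k :: nat assume k: "k < 6"
      have "(Y i k - Y j k) mod m = (Y i k mod m - Y j k mod m) mod m" by (simp add: mod_diff_eq)
      also have "\<dots> = ((\<delta> i + \<epsilon> k + X (\<sigma> i) (\<rho> k)) mod m - (\<delta> j + \<epsilon> k + X (\<sigma> j) (\<rho> k)) mod m) mod m"
        using a(3) i j k by simp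
      also have "\<dots> = ((\<delta> i - \<delta> j) + (X (\<sigma> i) (\<rho> k) - X (\<sigma> j) (\<rho> k))) mod m"
        by (simp add: mod_diff_eq algebra_simps)
      finally have "Ez g m (Y i k - Y j k) = Ez g m ((\<delta> i - \<delta> j) + (X (\<sigma> i) (\<rho> k) - X (\<sigma> j) (\<rho> k)))"
        by (rule Ez_cong)
      then show "Ez g m (Y i k - Y j k) = Ez g m (\<delta> i - \<delta> j) * Ez g m (X (\<sigma> i) (\<rho> k) - X (\<sigma> j) (\<rho> k))"
        using Ez_add[OF g m] by simp
    qed
    then have "(\<Sum>k<6. Ez g m (Y i k - Y j k)) = Ez g m (\<delta> i - \<delta> j) * (\<Sum>k<6. Ez g m (X (\<sigma> i) (\<rho> k) - X (\<sigma> j) (\<rho> k)))"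
      by (simp add: sum_distrib_left)
    also have "(\<Sum>k<6. Ez g m (X (\<sigma> i) (\<rho> k) - X (\<sigma> j) (\<rho> k))) = (\<Sum>k<6. Ez g m (X (\<sigma> i) k - X (\<sigma> j) k))"
      using sum.permute[OF a(2), of "\<lambda>k. Ez g m (X (\<sigma> i) k - X (\<sigma> j) k)"] by (simp add: comp_def)
    also have "\<dots> = 0" using o sij perm_lt[OF a(1) i] perm_lt[OF a(1) j] unfolding orthz_def by blast
    finally show "(\<Sum>k<6. Ez g m (Y i k - Y j k)) = 0" by simp
  qed
qed

lemma Rel_deph: "Rel m X (\<lambda>i j. (X i j - X i 0 - X 0 j + X 0 0) mod m)"
  unfolding Rel_def
  by (rule exI[of _ id], rule exI[of _ id], rule exI[of _ "\<lambda>i. X 0 0 - X i 0"], rule exI[of _ "\<lambda>j. - X 0 j"])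
     (simp add: permutes_id algebra_simps)

lemma Rel_col: "\<rho> permutes {..<6} \<Longrightarrow> Rel m X (\<lambda>i j. X i (\<rho> j))"
  unfolding Rel_def
  by (rule exI[of _ id], rule exI[of _ \<rho>], rule exI[of _ "\<lambda>i. 0"], rule exI[of _ "\<lambda>j. 0"])
     (simp add: permutes_id)

lemma Rel_row: "\<sigma> permutes {..<6} \<Longrightarrow> Rel m X (\<lambda>i j. X (\<sigma> i) j)"
  unfolding Rel_def
  by (rule exI[of _ \<sigma>], rule exI[of _ id], rule exI[of _ "\<lambda>i. 0"], rule exI[of _ "\<lambda>j. 0"])
     (simp add: permutes_id)

lemma sort_perm:
  fixes f :: "nat \<Rightarrow> 'a::linorder"
  shows "\<exists>p. p permutes {..<n} \<and> sorted (map (f \<circ> p) [0..<n])"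
proof -
  let ?xs = "map f [0..<n]"
  have "mset (sort ?xs) = mset ?xs" by simp
  then obtain p where p: "p permutes {..<length ?xs}" "permute_list p ?xs = sort ?xs"
    by (rule mset_eq_permutation)
  have pn: "p permutes {..<n}" using p(1) by simp
  have "permute_list p ?xs = map (f \<circ> p) [0..<n]"
    unfolding permute_list_def using perm_lt[OF pn] by (auto intro!: map_cong)
  then have "sorted (map (f \<circ> p) [0..<n])" using p(2) by (metis sorted_sort)
  then show ?thesis using pn by blast
qed

definition enc :: "int \<Rightarrow> int list \<Rightarrow> int" where
  "enc m w = foldl (\<lambda>acc x. acc * m + x) 0 w"

lemma foldl_nonneg: "m \<ge> 0 \<Longrightarrow> a \<ge> 0 \<Longrightarrow> (\<forall>x\<in>set w. x \<ge> 0) \<Longrightarrow> foldl (\<lambda>acc x. acc * m + x) a w \<ge> (0::int)"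
  by (induction w arbitrary: a) auto

lemma enc_nonneg: "m \<ge> 0 \<Longrightarrow> (\<forall>x\<in>set w. x \<ge> 0) \<Longrightarrow> enc m w \<ge> 0"
  unfolding enc_def by (rule foldl_nonneg) auto

definition rw :: "(nat \<Rightarrow> nat \<Rightarrow> int) \<Rightarrow> nat \<Rightarrow> int list" where
  "rw N i = map (N i) [0..<6]"

lemma perm_inv_lt: "p permutes {..<n} \<Longrightarrow> i < n \<Longrightarrow> inv p i < n"
  using perm_lt[OF permutes_inv] by blast

lemma perm_inv_eq: "p permutes S \<Longrightarrow> p (inv p i) = i"
  using permutes_inverses(1) by metis

lemma normalize:
  assumes g: "g ^ nat m = 1" and m: "m > 0" and o: "orthz g m X"
  shows "\<exists>N. Rel m X N \<and> orthz g m N \<and> (\<forall>i<6. \<forall>j<6. 0 \<le> N i j \<and> N i j < m)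
     \<and> (\<forall>j<6. N 0 j = 0) \<and> (\<forall>i<6. N i 0 = 0) \<and> sorted (rw N 1)
     \<and> enc m (rw N 2) \<le> enc m (rw N 3) \<and> enc m (rw N 3) \<le> enc m (rw N 4) \<and> enc m (rw N 4) \<le> enc m (rw N 5)"
proof -
  define X1 where "X1 = (\<lambda>i j. (X i j - X i 0 - X 0 j + X 0 0) mod m)"
  have r1: "Rel m X X1" unfolding X1_def by (rule Rel_deph)
  have X1r: "\<And>i j. 0 \<le> X1 i j \<and> X1 i j < m" unfolding X1_def using m by simp
  have X10: "\<And>j. X1 0 j = 0" "\<And>i. X1 i 0 = 0" unfolding X1_def by simp_all
  obtain \<rho> where \<rho>: "\<rho> permutes {..<6}" "sorted (map (X1 1 \<circ> \<rho>) [0..<6])"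
    using sort_perm by blast
  define X2 where "X2 = (\<lambda>i j. X1 i (\<rho> j))"
  have r2: "Rel m X1 X2" unfolding X2_def by (rule Rel_col[OF \<rho>(1)])
  have L: "rw X2 1 = map (X1 1 \<circ> \<rho>) [0..<6]" unfolding rw_def X2_def by simp
  have X210: "X2 1 0 = 0"
  proof -
    let ?j = "inv \<rho> 0"
    have j: "?j < 6" using perm_inv_lt[OF \<rho>(1)] by simp
    have "X2 1 ?j = 0" unfolding X2_def using perm_inv_eq[OF \<rho>(1)] X10 by simp
    moreover have "X2 1 0 \<le> X2 1 ?j"
      using sorted_nth_mono[OF \<rho>(2), of 0 ?j] j unfolding X2_def by simp
    ultimately show ?thesis using X1r[of 1 "\<rho> 0"] unfolding X2_def by simp
  qed
  define X3 where "X3 = (\<lambda>i j. (X2 i j - X2 i 0 - X2 0 j + X2 0 0) mod m)"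
  have r3: "Rel m X2 X3" unfolding X3_def by (rule Rel_deph)
  have X3r: "\<And>i j. 0 \<le> X3 i j \<and> X3 i j < m" unfolding X3_def using m by simp
  have X30: "\<And>j. X3 0 j = 0" "\<And>i. X3 i 0 = 0" unfolding X3_def by simp_all
  have X31: "\<And>j. X3 1 j = X2 1 j"
    unfolding X3_def using X210 X10 X1r unfolding X2_def by simp
  have "rw X3 1 = rw X2 1" unfolding rw_def using X31 by simp
  then have s3: "sorted (rw X3 1)" using \<rho>(2) L by simp
  define key where "key = (\<lambda>i::nat. if i = 0 then -2 else if i = 1 then -1 else enc m (rw X3 i))"
  have keynn: "\<And>i. i \<ge> 2 \<Longrightarrow> key i \<ge> 0"
    unfolding key_def rw_def using enc_nonneg m X3r by (simp add: less_imp_le)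
  obtain \<pi> where \<pi>: "\<pi> permutes {..<6}" "sorted (map (key \<circ> \<pi>) [0..<6])"
    using sort_perm by blast
  have km: "\<And>i j. i \<le> j \<Longrightarrow> j < 6 \<Longrightarrow> key (\<pi> i) \<le> key (\<pi> j)"
    using sorted_nth_mono[OF \<pi>(2)] by simp
  have inj\<pi>: "\<And>i j. \<pi> i = \<pi> j \<Longrightarrow> i = j" using permutes_inj[OF \<pi>(1)] by (metis injD)
  have p0: "\<pi> 0 = 0"
  proof -
    let ?j = "inv \<pi> 0"
    have "?j < 6" using perm_inv_lt[OF \<pi>(1)] by simp
    then have "key (\<pi> 0) \<le> key (\<pi> ?j)" using km by simp
    also have "\<pi> ?j = 0" using perm_inv_eq[OF \<pi>(1)] by simp
    finally have "key (\<pi> 0) \<le> -2" unfolding key_def by simp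
    then show ?thesis using keynn[of "\<pi> 0"] unfolding key_def by (auto split: if_splits)
  qed
  have p1: "\<pi> 1 = 1"
  proof -
    let ?j = "inv \<pi> 1"
    have j6: "?j < 6" using perm_inv_lt[OF \<pi>(1)] by simp
    have pj: "\<pi> ?j = 1" using perm_inv_eq[OF \<pi>(1)] by simp
    have "?j \<noteq> 0"
    proof
      assume "?j = 0" then have "\<pi> ?j = 0" using p0 by simp
      then show False using pj by simp
    qed
    then have "key (\<pi> 1) \<le> key (\<pi> ?j)" using km j6 by simp
    then have "key (\<pi> 1) \<le> -1" using pj unfolding key_def by simp
    moreover have "\<pi> 1 \<noteq> 0" using p0 inj\<pi>[of 1 0] by auto
    ultimately show ?thesis using keynn[of "\<pi> 1"] unfolding key_def by (auto split: if_splits)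
  qed
  have pge: "\<And>i. 2 \<le> i \<Longrightarrow> \<pi> i \<ge> 2"
  proof -
    fix i :: nat assume "2 \<le> i"
    then have "\<pi> i \<noteq> 0" "\<pi> i \<noteq> 1" using p0 p1 inj\<pi>[of i 0] inj\<pi>[of i 1] by auto
    then show "\<pi> i \<ge> 2" by simp
  qed
  define X4 where "X4 = (\<lambda>i j. X3 (\<pi> i) j)"
  have r4: "Rel m X3 X4" unfolding X4_def by (rule Rel_row[OF \<pi>(1)])
  have kk: "\<And>i. 2 \<le> i \<Longrightarrow> i < 5 \<Longrightarrow> enc m (rw X4 i) \<le> enc m (rw X4 (Suc i))"
  proof -
    fix i :: nat assume i: "2 \<le> i" "i < 5"
    have "key (\<pi> i) \<le> key (\<pi> (Suc i))" using km i by simp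
    then show "enc m (rw X4 i) \<le> enc m (rw X4 (Suc i))"
      using pge[of i] pge[of "Suc i"] i unfolding key_def X4_def rw_def by simp
  qed
  have RX: "Rel m X X4" using Rel_trans[OF Rel_trans[OF Rel_trans[OF r1 r2] r3] r4] .
  have OX: "orthz g m X4" using Rel_orth[OF g m o RX] .
  have "\<forall>i<6. \<forall>j<6. 0 \<le> X4 i j \<and> X4 i j < m" unfolding X4_def using X3r by simp
  moreover have "\<forall>j<6. X4 0 j = 0" "\<forall>i<6. X4 i 0 = 0" unfolding X4_def using X30 p0 by simp_all
  moreover have "sorted (rw X4 1)" using s3 p1 unfolding X4_def rw_def by simp
  moreover have "enc m (rw X4 2) \<le> enc m (rw X4 3)" "enc m (rw X4 3) \<le> enc m (rw X4 4)"
       "enc m (rw X4 4) \<le> enc m (rw X4 5)" using kk[of 2] kk[of 3] kk[of 4] by (simp_all add: numeral_eq_Suc)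
  ultimately show ?thesis using RX OX by blast
qed

fun cnt :: "int \<Rightarrow> int list \<Rightarrow> nat" where
  "cnt r [] = 0" | "cnt r (x#xs) = (if x = r then Suc (cnt r xs) else cnt r xs)"

definition chk :: "int \<Rightarrow> int list \<Rightarrow> bool" where
  "chk m ds = (if m = 3 then cnt 0 ds = cnt 1 ds \<and> cnt 1 ds = cnt 2 ds
               else cnt 0 ds = cnt 2 ds \<and> cnt 1 ds = cnt 3 ds)"

definition ok :: "int \<Rightarrow> int list \<Rightarrow> int list \<Rightarrow> bool" where
  "ok m w v = chk m (map2 (\<lambda>x y. (x - y) mod m) w v)"

fun words :: "int \<Rightarrow> nat \<Rightarrow> int list list" where
  "words m 0 = [[]]"
| "words m (Suc n) = concat (map (\<lambda>x. map ((#) x) (words m n)) [0..m-1])"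

definition cand :: "int \<Rightarrow> int list list" where
  "cand m = filter (\<lambda>w. ok m w [0,0,0,0,0,0]) (map ((#) 0) (words m 5))"

definition okle :: "int \<Rightarrow> int list \<Rightarrow> int list \<Rightarrow> bool" where
  "okle m w v = (ok m w v \<and> enc m w \<le> enc m v)"

fun lv :: "int \<Rightarrow> (int list \<Rightarrow> int list list \<Rightarrow> int list list list) \<Rightarrow> int list list \<Rightarrow> int list list \<Rightarrow> int list list list" where
  "lv m f cs [] = []"
| "lv m f cs (w#ws) = map ((#) w) (f w (filter (okle m w) cs)) @ lv m f cs ws"

definition F0 :: "int \<Rightarrow> int list \<Rightarrow> int list list \<Rightarrow> int list list list" where "F0 m w cs = [[]]"
definition F1 :: "int \<Rightarrow> int list \<Rightarrow> int list list \<Rightarrow> int list list list" where "F1 m w cs = lv m (F0 m) cs cs"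
definition F2 :: "int \<Rightarrow> int list \<Rightarrow> int list list \<Rightarrow> int list list list" where "F2 m w cs = lv m (F1 m) cs cs"
definition F3 :: "int \<Rightarrow> int list \<Rightarrow> int list list \<Rightarrow> int list list list" where "F3 m w cs = lv m (F2 m) cs cs"

fun tp :: "int \<Rightarrow> int list list \<Rightarrow> int list list \<Rightarrow> int list list list" where
  "tp m C [] = []"
| "tp m C (w#ws) = map ((#) w) (lv m (F3 m) (filter (ok m w) C) (filter (ok m w) C)) @ tp m C ws"

definition enum :: "int \<Rightarrow> int list list list" where
  "enum m = tp m (cand m) (filter sorted (cand m))"

lemma lv_mem: "w \<in> set ws \<Longrightarrow> xs \<in> set (f w (filter (okle m w) cs)) \<Longrightarrow> w # xs \<in> set (lv m f cs ws)"
  by (induction ws) auto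

lemma tp_mem: "w \<in> set ws \<Longrightarrow> xs \<in> set (lv m (F3 m) (filter (ok m w) C) (filter (ok m w) C)) \<Longrightarrow> w # xs \<in> set (tp m C ws)"
  by (induction ws) auto

lemma enum_mem:
  assumes c: "w1 \<in> set (cand m)" "w2 \<in> set (cand m)" "w3 \<in> set (cand m)" "w4 \<in> set (cand m)" "w5 \<in> set (cand m)"
    and s: "sorted w1"
    and o: "ok m w1 w2" "ok m w1 w3" "ok m w1 w4" "ok m w1 w5" "ok m w2 w3" "ok m w2 w4" "ok m w2 w5"
       "ok m w3 w4" "ok m w3 w5" "ok m w4 w5"
    and e: "enc m w2 \<le> enc m w3" "enc m w3 \<le> enc m w4" "enc m w4 \<le> enc m w5"
  shows "[w1, w2, w3, w4, w5] \<in> set (enum m)"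
proof -
  let ?C2 = "filter (ok m w1) (cand m)"
  let ?C3 = "filter (okle m w2) ?C2"
  let ?C4 = "filter (okle m w3) ?C3"
  let ?C5 = "filter (okle m w4) ?C4"
  have "[w5] \<in> set (F1 m w4 ?C5)" unfolding F1_def
    by (rule lv_mem) (use c o e in \<open>auto simp: okle_def F0_def\<close>)
  then have "[w4, w5] \<in> set (F2 m w3 ?C4)" unfolding F2_def
    by (intro lv_mem) (use c o e in \<open>auto simp: okle_def\<close>)
  then have "[w3, w4, w5] \<in> set (F3 m w2 ?C3)" unfolding F3_def
    by (intro lv_mem) (use c o e in \<open>auto simp: okle_def\<close>)
  then have "[w2, w3, w4, w5] \<in> set (lv m (F3 m) ?C2 ?C2)"
    by (intro lv_mem) (use c o e in \<open>auto simp: okle_def\<close>)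
  then show ?thesis unfolding enum_def
    by (intro tp_mem) (use c s in auto)
qed

lemma set_words: "m \<ge> 1 \<Longrightarrow> set (words m n) = {w. length w = n \<and> (\<forall>x\<in>set w. 0 \<le> x \<and> x < m)}"
proof (induction n)
  case 0 then show ?case by auto
next
  case (Suc n)
  show ?case
  proof (intro set_eqI iffI)
    fix w assume "w \<in> set (words m (Suc n))"
    then show "w \<in> {w. length w = Suc n \<and> (\<forall>x\<in>set w. 0 \<le> x \<and> x < m)}" using Suc by auto
  next
    fix w assume w: "w \<in> {w. length w = Suc n \<and> (\<forall>x\<in>set w. 0 \<le> x \<and> x < m)}"
    then obtain x xs where "w = x # xs" by (cases w) auto
    then show "w \<in> set (words m (Suc n))" using w Suc by auto
  qed
qed

lemma cnt_append: "cnt r (xs @ ys) = cnt r xs + cnt r ys"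
  by (induction xs) auto

lemma cnt_sum: "real (cnt r (map f [0..<n])) = (\<Sum>k<n. if f k = r then 1 else 0)"
  by (induction n) (auto simp: cnt_append)

lemma omega3_eq: "omega3 = Complex (-1/2) (sqrt 3 / 2)"
proof -
  have "sin (2 * pi / 3) = sqrt 3 / 2" using sin_120' by (simp add: mult.commute)
  then show ?thesis by (intro complex_eqI) (simp_all add: omega3_def cos_120)
qed

lemma omega3_Re: "Re omega3 = -1/2" and omega3_Im: "Im omega3 = sqrt 3 / 2"
  by (simp_all add: omega3_eq)

lemma omega3_pow3: "omega3 ^ nat 3 = 1"
proof -
  have "omega3 ^ 3 = cis (real 3 * (2 * pi / 3))" unfolding omega3_def by (rule DeMoivre)
  also have "real 3 * (2 * pi / 3) = 2 * pi" by simp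
  finally show ?thesis by simp
qed

lemma omega3_norm: "cmod omega3 = 1" unfolding omega3_def by simp

lemma i_pow4: "\<i> ^ nat 4 = 1" by (simp add: power_numeral_reduce)

lemma omega3_sq: "omega3 ^ 2 = Complex (-1/2) (- sqrt 3 / 2)"
  unfolding omega3_eq by (simp add: power2_eq_square complex_eq_iff)

lemma chk3:
  assumes "(\<Sum>k<6. Ez omega3 3 (d k)) = 0"
  shows "chk 3 (map (\<lambda>k. d k mod 3) [0..<6])"
proof -
  define c where "c = (\<lambda>r k. if d k mod 3 = r then 1 else (0::real))"
  have pk: "\<And>k. Re (Ez omega3 3 (d k)) = 3/2 * c 0 k - 1/2 \<and> Im (Ez omega3 3 (d k)) = sqrt 3 / 2 * (c 1 k - c 2 k)
             \<and> c 0 k + c 1 k + c 2 k = 1"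
  proof -
    fix k
    have "d k mod 3 = 0 \<or> d k mod 3 = 1 \<or> d k mod 3 = 2" by auto
    then show "?thesis k"
    proof (elim disjE)
      assume h: "d k mod 3 = 0"
      then have "Ez omega3 3 (d k) = 1" unfolding Ez_def by simp
      then show ?thesis using h unfolding c_def by simp
    next
      assume h: "d k mod 3 = 1"
      then have "Ez omega3 3 (d k) = omega3" unfolding Ez_def by simp
      then show ?thesis using h omega3_Re omega3_Im unfolding c_def by simp
    next
      assume h: "d k mod 3 = 2"
      then have "Ez omega3 3 (d k) = omega3 ^ 2" unfolding Ez_def by simp
      then show ?thesis using h omega3_sq unfolding c_def by simp
    qed
  qed
  have "Re (\<Sum>k<6. Ez omega3 3 (d k)) = 0" "Im (\<Sum>k<6. Ez omega3 3 (d k)) = 0" using assms by simp_all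
  then have A: "(\<Sum>k<6. 3/2 * c 0 k - 1/2) = 0" "(\<Sum>k<6. sqrt 3 / 2 * (c 1 k - c 2 k)) = 0"
    using pk by (simp_all add: Re_sum Im_sum)
  have B: "(\<Sum>k<6. c 0 k + c 1 k + c 2 k) = 6" using pk by simp
  have "(\<Sum>k<6. 3/2 * c 0 k - 1/2) = 3/2 * (\<Sum>k<6. c 0 k) - 3"
    by (simp only: sum_subtractf sum_distrib_left[symmetric]) simp
  then have n0: "(\<Sum>k<6. c 0 k) = 2" using A(1) by linarith
  have "(\<Sum>k<6. sqrt 3 / 2 * (c 1 k - c 2 k)) = sqrt 3 / 2 * ((\<Sum>k<6. c 1 k) - (\<Sum>k<6. c 2 k))"
    by (simp only: sum_subtractf sum_distrib_left[symmetric])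
  then have "sqrt 3 / 2 * ((\<Sum>k<6. c 1 k) - (\<Sum>k<6. c 2 k)) = 0" using A(2) by simp
  then have n12: "(\<Sum>k<6. c 1 k) = (\<Sum>k<6. c 2 k)" by simp
  have n3: "(\<Sum>k<6. c 0 k) + (\<Sum>k<6. c 1 k) + (\<Sum>k<6. c 2 k) = 6" using B by (simp add: sum.distrib)
  have cs: "\<And>r. real (cnt r (map (\<lambda>k. d k mod 3) [0..<6])) = (\<Sum>k<6. c r k)"
    unfolding c_def by (rule cnt_sum)
  show ?thesis unfolding chk_def using n0 n12 n3 cs[of 0] cs[of 1] cs[of 2]
    by (simp del: of_nat_numeral)
qed

lemma chk4:
  assumes "(\<Sum>k<6. Ez \<i> 4 (d k)) = 0"
  shows "chk 4 (map (\<lambda>k. d k mod 4) [0..<6])"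
proof -
  define c where "c = (\<lambda>r k. if d k mod 4 = r then 1 else (0::real))"
  have pk: "\<And>k. Re (Ez \<i> 4 (d k)) = c 0 k - c 2 k \<and> Im (Ez \<i> 4 (d k)) = c 1 k - c 3 k"
  proof -
    fix k
    have "d k mod 4 \<in> {0,1,2,3}" by auto
    then show "?thesis k"
      unfolding Ez_def c_def by (auto simp: power_numeral_reduce)
  qed
  have "Re (\<Sum>k<6. Ez \<i> 4 (d k)) = 0" "Im (\<Sum>k<6. Ez \<i> 4 (d k)) = 0" using assms by simp_all
  then have A: "(\<Sum>k<6. c 0 k - c 2 k) = 0" "(\<Sum>k<6. c 1 k - c 3 k) = 0"
    using pk by (simp_all add: Re_sum Im_sum)
  have cs: "\<And>r. real (cnt r (map (\<lambda>k. d k mod 4) [0..<6])) = (\<Sum>k<6. c r k)"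
    unfolding c_def by (rule cnt_sum)
  show ?thesis unfolding chk_def using A cs[of 0] cs[of 1] cs[of 2] cs[of 3]
    by (simp add: sum_subtractf del: of_nat_numeral)
qed

definition pl :: "nat list \<Rightarrow> nat \<Rightarrow> nat" where
  "pl ps i = (if i < length ps then ps ! i else i)"

lemma pl_perm:
  assumes l: "length ps = n" and d: "distinct ps" and b: "list_all (\<lambda>x. x < n) ps"
  shows "pl ps permutes {..<n}"
proof -
  have sub: "set ps \<subseteq> {..<n}" using b by (auto simp: list_all_iff)
  have "card (set ps) = n" using d l by (simp add: distinct_card)
  then have S: "set ps = {..<n}" using sub by (simp add: card_subset_eq)
  have "bij_betw (pl ps) {..<n} {..<n}"
  proof (rule bij_betw_imageI)
    show "inj_on (pl ps) {..<n}"
      using d l unfolding inj_on_def pl_def by (simp add: nth_eq_iff_index_eq)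
    show "pl ps ` {..<n} = {..<n}"
      using l S unfolding pl_def by (auto simp: set_conv_nth image_iff)
  qed
  moreover have "\<And>x. x \<notin> {..<n} \<Longrightarrow> pl ps x = x" using l unfolding pl_def by simp
  ultimately show ?thesis by (rule bij_imp_permutes)
qed

lemma leaf:
  assumes R: "\<forall>i<6. rw N i = M ! i"
    and C: "list_all (\<lambda>i. list_all (\<lambda>j. (M ! i ! j) mod m = (ds ! i + es ! j + V (pl ps i) (pl rs j)) mod m) [0..<6]) [0..<6]"
    and P1: "pl ps permutes {..<6}" and P2: "pl rs permutes {..<6}"
  shows "Rel m V N"
proof -
  have "\<forall>i<6. \<forall>j<6. N i j mod m = ((\<lambda>i. ds ! i) i + (\<lambda>j. es ! j) j + V (pl ps i) (pl rs j)) mod m"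
  proof (intro allI impI)
    fix i j :: nat assume i: "i < 6" and j: "j < 6"
    have "N i j = rw N i ! j" unfolding rw_def using j by simp
    also have "\<dots> = M ! i ! j" using R i by simp
    finally show "N i j mod m = ((\<lambda>i. ds ! i) i + (\<lambda>j. es ! j) j + V (pl ps i) (pl rs j)) mod m"
      using C i j by (simp add: list_all_iff)
  qed
  then show ?thesis unfolding Rel_def using P1 P2 by blast
qed

lemma all6: "(\<forall>i<(6::nat). P i) = (P 0 \<and> P 1 \<and> P 2 \<and> P 3 \<and> P 4 \<and> P 5)"
proof -
  have "\<And>i. i < (6::nat) \<longleftrightarrow> i = 0 \<or> i = 1 \<or> i = 2 \<or> i = 3 \<or> i = 4 \<or> i = 5" by arith
  then show ?thesis by auto
qed

lemma Rel_to_equiv: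
  assumes g: "g ^ nat m = 1" "m > 0" "cmod g = 1" and R: "Rel m V t"
    and H: "\<forall>i<6. \<forall>j<6. H i j = Ez g m (t i j)"
    and Vc: "\<forall>k<6. \<forall>l<6. Vc k l = Ez g m (V k l)"
  shows "complex_equiv 6 H Vc"
proof -
  obtain \<sigma> \<rho> \<delta> \<epsilon> where a: "\<sigma> permutes {..<6}" "\<rho> permutes {..<6}"
    "\<forall>i<6. \<forall>j<6. t i j mod m = (\<delta> i + \<epsilon> j + V (\<sigma> i) (\<rho> j)) mod m"
    using R unfolding Rel_def by blast
  show ?thesis
  proof (rule equiv_from[OF a(1) a(2)])
    show "\<forall>i<6. cmod (Ez g m (\<delta> i)) = 1" "\<forall>j<6. cmod (Ez g m (\<epsilon> j)) = 1"
      using Ez_norm[OF g(3)] by simp_all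
    show "\<forall>i<6. \<forall>j<6. H i j = Ez g m (\<delta> i) * Ez g m (\<epsilon> j) * Vc (\<sigma> i) (\<rho> j)"
    proof (intro allI impI)
      fix i j :: nat assume i: "i < 6" and j: "j < 6"
      have "t i j mod m = (\<delta> i + \<epsilon> j + V (\<sigma> i) (\<rho> j)) mod m" using a(3) i j by simp
      then have "Ez g m (t i j) = Ez g m (\<delta> i + \<epsilon> j + V (\<sigma> i) (\<rho> j))" by (rule Ez_cong)
      then have "H i j = Ez g m (\<delta> i + \<epsilon> j + V (\<sigma> i) (\<rho> j))"
        using H i j by simp
      also have "\<dots> = Ez g m (\<delta> i) * Ez g m (\<epsilon> j) * Ez g m (V (\<sigma> i) (\<rho> j))"
        using Ez_add[OF g(1,2)] by simp
      also have "Ez g m (V (\<sigma> i) (\<rho> j)) = Vc (\<sigma> i) (\<rho> j)"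
        using Vc perm_lt[OF a(1) i] perm_lt[OF a(2) j] by simp
      finally show "H i j = Ez g m (\<delta> i) * Ez g m (\<epsilon> j) * Vc (\<sigma> i) (\<rho> j)" .
    qed
  qed
qed

lemma CHM_orthz:
  assumes g: "g ^ nat m = 1" "m > 0" "cmod g = 1"
    and H: "\<forall>i<6. \<forall>j<6. H i j = Ez g m (t i j)" and C: "is_CHM 6 H"
  shows "orthz g m t"
  unfolding orthz_def
proof (intro allI impI)
  fix i j :: nat assume i: "i < 6" and j: "j < 6" and ij: "i \<noteq> j"
  have "(\<Sum>k<6. H i k * cnj (H j k)) = 0" using C i j ij unfolding is_CHM_def by simp
  moreover have "\<And>k. k < 6 \<Longrightarrow> H i k * cnj (H j k) = Ez g m (t i k - t j k)"
  proof -
    fix k :: nat assume k: "k < 6"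
    have "H i k * cnj (H j k) = Ez g m (t i k) * Ez g m (- t j k)"
      using H i j k Ez_cnj[OF g] by simp
    also have "\<dots> = Ez g m (t i k + - t j k)" using Ez_add[OF g(1,2)] by metis
    finally show "H i k * cnj (H j k) = Ez g m (t i k - t j k)" by simp
  qed
  ultimately show "(\<Sum>k<6. Ez g m (t i k - t j k)) = 0" by simp
qed

lemma rw0: "(\<forall>j<6. N 0 j = 0) \<Longrightarrow> rw N 0 = [0,0,0,0,0,0]"
  unfolding rw_def by (simp add: upt_rec)

lemma rw_cons: "rw N i = N i 0 # map (N i) [1..<6]"
  unfolding rw_def by (simp add: upt_rec)

lemma Zgen:
  assumes g: "g ^ nat m = 1" "m > 0" "cmod g = 1"
    and chkL: "\<And>d. (\<Sum>k<6. Ez g m (d k)) = 0 \<Longrightarrow> chk m (map (\<lambda>k. d k mod m) [0..<6])"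
    and H: "\<forall>i<6. \<forall>j<6. H i j = Ez g m (t i j)" and C: "is_CHM 6 H"
    and leafs: "\<And>N. \<forall>j<6. N 0 j = 0 \<Longrightarrow> [rw N 1, rw N 2, rw N 3, rw N 4, rw N 5] \<in> set (enum m) \<Longrightarrow> Rel m V N"
    and Vc: "\<forall>k<6. \<forall>l<6. Vc k l = Ez g m (V k l)"
  shows "complex_equiv 6 H Vc"
proof -
  have o: "orthz g m t" by (rule CHM_orthz[OF g H C])
  obtain N where N: "Rel m t N" "orthz g m N" "\<forall>i<6. \<forall>j<6. 0 \<le> N i j \<and> N i j < m"
     "\<forall>j<6. N 0 j = 0" "\<forall>i<6. N i 0 = 0" "sorted (rw N 1)"
     "enc m (rw N 2) \<le> enc m (rw N 3)" "enc m (rw N 3) \<le> enc m (rw N 4)" "enc m (rw N 4) \<le> enc m (rw N 5)"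
    using normalize[OF g(1,2) o] by blast
  have okN: "\<And>i j. i < 6 \<Longrightarrow> j < 6 \<Longrightarrow> i \<noteq> j \<Longrightarrow> ok m (rw N i) (rw N j)"
  proof -
    fix i j :: nat assume i: "i < 6" and j: "j < 6" and ij: "i \<noteq> j"
    have "(\<Sum>k<6. Ez g m (N i k - N j k)) = 0" using N(2) i j ij unfolding orthz_def by blast
    then have "chk m (map (\<lambda>k. (N i k - N j k) mod m) [0..<6])" by (rule chkL)
    then show "ok m (rw N i) (rw N j)" unfolding ok_def rw_def by (simp add: map2_map_map)
  qed
  have candN: "\<And>i. i < 6 \<Longrightarrow> i \<noteq> 0 \<Longrightarrow> rw N i \<in> set (cand m)"
  proof -
    fix i :: nat assume i: "i < 6" and i0: "i \<noteq> 0"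
    have "map (N i) [1..<6] \<in> set (words m 5)"
      using set_words[of m 5] g(2) N(3) i by auto
    moreover have "rw N i = 0 # map (N i) [1..<6]" using rw_cons N(5) i by simp
    moreover have "ok m (rw N i) [0,0,0,0,0,0]" using okN[OF i _ i0] rw0[of N, OF N(4)] by simp
    ultimately show "rw N i \<in> set (cand m)" unfolding cand_def by auto
  qed
  have c: "rw N 1 \<in> set (cand m)" "rw N 2 \<in> set (cand m)" "rw N 3 \<in> set (cand m)"
      "rw N 4 \<in> set (cand m)" "rw N 5 \<in> set (cand m)" by (rule candN; simp)+
  have o: "ok m (rw N 1) (rw N 2)" "ok m (rw N 1) (rw N 3)" "ok m (rw N 1) (rw N 4)" "ok m (rw N 1) (rw N 5)"
     "ok m (rw N 2) (rw N 3)" "ok m (rw N 2) (rw N 4)" "ok m (rw N 2) (rw N 5)"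
     "ok m (rw N 3) (rw N 4)" "ok m (rw N 3) (rw N 5)" "ok m (rw N 4) (rw N 5)"
    by (rule okN; simp)+
  have "[rw N 1, rw N 2, rw N 3, rw N 4, rw N 5] \<in> set (enum m)"
    by (rule enum_mem[OF c N(6) o N(7-9)])
  then have "Rel m V N" using leafs N(4) by blast
  then have "Rel m V t" using Rel_trans Rel_sym[OF N(1)] by blast
  then show ?thesis using Rel_to_equiv[OF g _ H Vc] by blast
qed

lemma Ez_small: "n < 3 \<Longrightarrow> Ez g 3 (int n) = g ^ n"
  unfolding Ez_def by simp

definition tao_i :: "nat \<Rightarrow> nat \<Rightarrow> int" where "tao_i i j = int (tao_exp ! i ! j)"

definition h1e :: "int list list" where
  "h1e = [[1,0,0,0,0,0],[0,1,0,0,2,2],[0,0,1,2,0,2],[0,0,2,1,2,0],[0,2,0,2,1,0],[0,2,2,0,0,1]]"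

definition h1i :: "nat \<Rightarrow> nat \<Rightarrow> int" where "h1i i j = h1e ! i ! j"

lemma S6_Ez: "\<forall>k<6. \<forall>l<6. S6_0 k l = Ez omega3 3 (tao_i k l)"
  unfolding all6 S6_0_def tao_i_def Ez_def tao_exp_def by simp

lemma H1_Ez: "\<forall>k<6. \<forall>l<6. H1 k l = Ez \<i> 4 (h1i k l)"
  unfolding all6 H1_def H1_list_def h1i_def h1e_def Ez_def by simp

lemma enum3: "list_all (\<lambda>x. x \<in> set [[[0,0,1,1,2,2],[0,1,0,2,1,2],[0,1,2,0,2,1],[0,2,1,2,0,1],[0,2,2,1,1,0]],[[0,0,1,1,2,2],[0,1,0,2,2,1],[0,1,2,0,1,2],[0,2,1,2,1,0],[0,2,2,1,0,1]]]) (enum 3)"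
  by code_simp

lemma leaf3_0: assumes "\<forall>i<6. rw N i = [[0,0,0,0,0,0],[0,0,1,1,2,2],[0,1,0,2,1,2],[0,1,2,0,2,1],[0,2,1,2,0,1],[0,2,2,1,1,0]] ! i" shows "Rel 3 tao_i N"
  using assms by (rule leaf[where M="[[0,0,0,0,0,0],[0,0,1,1,2,2],[0,1,0,2,1,2],[0,1,2,0,2,1],[0,2,1,2,0,1],[0,2,2,1,1,0]]" and ps="[0,1,2,3,5,4]" and rs="[0,1,2,3,5,4]" and ds="[0,0,0,0,0,0]" and es="[0,0,0,0,0,0]"])
     (code_simp, simp add: pl_perm, simp add: pl_perm)

lemma leaf3_1: assumes "\<forall>i<6. rw N i = [[0,0,0,0,0,0],[0,0,1,1,2,2],[0,1,0,2,2,1],[0,1,2,0,1,2],[0,2,1,2,1,0],[0,2,2,1,0,1]] ! i" shows "Rel 3 tao_i N"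
  using assms by (rule leaf[where M="[[0,0,0,0,0,0],[0,0,1,1,2,2],[0,1,0,2,2,1],[0,1,2,0,1,2],[0,2,1,2,1,0],[0,2,2,1,0,1]]" and ps="[0,1,2,3,5,4]" and rs="[0,1,2,3,4,5]" and ds="[0,0,0,0,0,0]" and es="[0,0,0,0,0,0]"])
     (code_simp, simp add: pl_perm, simp add: pl_perm)

lemma leafs3: assumes z: "\<forall>j<6. N 0 j = 0" and e: "[rw N 1, rw N 2, rw N 3, rw N 4, rw N 5] \<in> set (enum 3)"
  shows "Rel 3 tao_i N"
proof -
  have "[rw N 1, rw N 2, rw N 3, rw N 4, rw N 5] \<in> set [[[0,0,1,1,2,2],[0,1,0,2,1,2],[0,1,2,0,2,1],[0,2,1,2,0,1],[0,2,2,1,1,0]],[[0,0,1,1,2,2],[0,1,0,2,2,1],[0,1,2,0,1,2],[0,2,1,2,1,0],[0,2,2,1,0,1]]]"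
    using enum3 e unfolding list_all_iff by blast
  then show ?thesis
    apply (simp only: set_simps insert_iff empty_iff list.inject simp_thms)
    apply (elim disjE conjE)
    subgoal using leaf3_0[of N] rw0[of N, OF z] by (simp add: all6)
    subgoal using leaf3_1[of N] rw0[of N, OF z] by (simp add: all6)
    done
qed

lemma enum4: "list_all (\<lambda>x. x \<in> set [[[0,0,1,2,2,3],[0,1,3,0,2,2],[0,2,1,3,0,2],[0,2,3,2,1,0],[0,3,2,1,3,1]],[[0,0,1,2,2,3],[0,1,3,1,3,2],[0,2,0,3,2,1],[0,2,2,0,1,3],[0,3,2,2,0,1]],[[0,0,1,2,2,3],[0,1,3,2,0,2],[0,2,1,0,3,2],[0,2,3,1,2,0],[0,3,2,3,1,1]],[[0,0,1,2,2,3],[0,1,3,3,1,2],[0,2,0,2,3,1],[0,2,2,1,0,3],[0,3,2,0,2,1]],[[0,1,1,2,3,3],[0,0,2,3,1,2],[0,2,0,3,2,1],[0,2,3,1,0,2],[0,3,2,1,2,0]],[[0,1,1,2,3,3],[0,0,2,3,2,1],[0,2,0,3,1,2],[0,2,3,1,2,0],[0,3,2,1,0,2]],[[0,1,1,2,3,3],[0,1,3,3,1,2],[0,2,3,1,3,1],[0,3,1,3,2,1],[0,3,2,1,1,3]],[[0,1,1,2,3,3],[0,1,3,3,2,1],[0,2,3,1,1,3],[0,3,1,3,1,2],[0,3,2,1,3,1]]]) (enum 4)"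
  by code_simp

lemma leaf4_0: assumes "\<forall>i<6. rw N i = [[0,0,0,0,0,0],[0,0,1,2,2,3],[0,1,3,0,2,2],[0,2,1,3,0,2],[0,2,3,2,1,0],[0,3,2,1,3,1]] ! i" shows "Rel 4 h1i N"
  using assms by (rule leaf[where M="[[0,0,0,0,0,0],[0,0,1,2,2,3],[0,1,3,0,2,2],[0,2,1,3,0,2],[0,2,3,2,1,0],[0,3,2,1,3,1]]" and ps="[0,1,4,2,3,5]" and rs="[5,4,0,2,3,1]" and ds="[0,2,0,2,0,3]" and es="[0,0,3,0,0,0]"])
     (code_simp, simp add: pl_perm, simp add: pl_perm)

lemma leaf4_1: assumes "\<forall>i<6. rw N i = [[0,0,0,0,0,0],[0,0,1,2,2,3],[0,1,3,1,3,2],[0,2,0,3,2,1],[0,2,2,0,1,3],[0,3,2,2,0,1]] ! i" shows "Rel 4 h1i N"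
  using assms by (rule leaf[where M="[[0,0,0,0,0,0],[0,0,1,2,2,3],[0,1,3,1,3,2],[0,2,0,3,2,1],[0,2,2,0,1,3],[0,3,2,2,0,1]]" and ps="[0,1,2,5,4,3]" and rs="[2,3,1,5,4,0]" and ds="[0,0,3,2,0,2]" and es="[0,0,0,0,0,3]"])
     (code_simp, simp add: pl_perm, simp add: pl_perm)

lemma leaf4_2: assumes "\<forall>i<6. rw N i = [[0,0,0,0,0,0],[0,0,1,2,2,3],[0,1,3,2,0,2],[0,2,1,0,3,2],[0,2,3,1,2,0],[0,3,2,3,1,1]] ! i" shows "Rel 4 h1i N"
  using assms by (rule leaf[where M="[[0,0,0,0,0,0],[0,0,1,2,2,3],[0,1,3,2,0,2],[0,2,1,0,3,2],[0,2,3,1,2,0],[0,3,2,3,1,1]]" and ps="[0,1,4,2,3,5]" and rs="[5,4,0,3,2,1]" and ds="[0,2,0,2,0,3]" and es="[0,0,3,0,0,0]"])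
     (code_simp, simp add: pl_perm, simp add: pl_perm)

lemma leaf4_3: assumes "\<forall>i<6. rw N i = [[0,0,0,0,0,0],[0,0,1,2,2,3],[0,1,3,3,1,2],[0,2,0,2,3,1],[0,2,2,1,0,3],[0,3,2,0,2,1]] ! i" shows "Rel 4 h1i N"
  using assms by (rule leaf[where M="[[0,0,0,0,0,0],[0,0,1,2,2,3],[0,1,3,3,1,2],[0,2,0,2,3,1],[0,2,2,1,0,3],[0,3,2,0,2,1]]" and ps="[0,1,2,5,4,3]" and rs="[2,3,1,4,5,0]" and ds="[0,0,3,2,0,2]" and es="[0,0,0,0,0,3]"])
     (code_simp, simp add: pl_perm, simp add: pl_perm)

lemma leaf4_4: assumes "\<forall>i<6. rw N i = [[0,0,0,0,0,0],[0,1,1,2,3,3],[0,0,2,3,1,2],[0,2,0,3,2,1],[0,2,3,1,0,2],[0,3,2,1,2,0]] ! i" shows "Rel 4 h1i N"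
  using assms by (rule leaf[where M="[[0,0,0,0,0,0],[0,1,1,2,3,3],[0,0,2,3,1,2],[0,2,0,3,2,1],[0,2,3,1,0,2],[0,3,2,1,2,0]]" and ps="[0,1,2,3,5,4]" and rs="[1,4,5,0,2,3]" and ds="[0,3,0,0,2,2]" and es="[0,0,0,3,0,0]"])
     (code_simp, simp add: pl_perm, simp add: pl_perm)

lemma leaf4_5: assumes "\<forall>i<6. rw N i = [[0,0,0,0,0,0],[0,1,1,2,3,3],[0,0,2,3,2,1],[0,2,0,3,1,2],[0,2,3,1,2,0],[0,3,2,1,0,2]] ! i" shows "Rel 4 h1i N"
  using assms by (rule leaf[where M="[[0,0,0,0,0,0],[0,1,1,2,3,3],[0,0,2,3,2,1],[0,2,0,3,1,2],[0,2,3,1,2,0],[0,3,2,1,0,2]]" and ps="[0,1,2,3,5,4]" and rs="[1,4,5,0,3,2]" and ds="[0,3,0,0,2,2]" and es="[0,0,0,3,0,0]"])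
     (code_simp, simp add: pl_perm, simp add: pl_perm)

lemma leaf4_6: assumes "\<forall>i<6. rw N i = [[0,0,0,0,0,0],[0,1,1,2,3,3],[0,1,3,3,1,2],[0,2,3,1,3,1],[0,3,1,3,2,1],[0,3,2,1,1,3]] ! i" shows "Rel 4 h1i N"
  using assms by (rule leaf[where M="[[0,0,0,0,0,0],[0,1,1,2,3,3],[0,1,3,3,1,2],[0,2,3,1,3,1],[0,3,1,3,2,1],[0,3,2,1,1,3]]" and ps="[0,1,4,2,5,3]" and rs="[0,2,3,1,5,4]" and ds="[3,0,0,0,0,0]" and es="[0,1,1,1,1,1]"])
     (code_simp, simp add: pl_perm, simp add: pl_perm)

lemma leaf4_7: assumes "\<forall>i<6. rw N i = [[0,0,0,0,0,0],[0,1,1,2,3,3],[0,1,3,3,2,1],[0,2,3,1,1,3],[0,3,1,3,1,2],[0,3,2,1,3,1]] ! i" shows "Rel 4 h1i N"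
  using assms by (rule leaf[where M="[[0,0,0,0,0,0],[0,1,1,2,3,3],[0,1,3,3,2,1],[0,2,3,1,1,3],[0,3,1,3,1,2],[0,3,2,1,3,1]]" and ps="[0,1,4,2,5,3]" and rs="[0,2,3,1,4,5]" and ds="[3,0,0,0,0,0]" and es="[0,1,1,1,1,1]"])
     (code_simp, simp add: pl_perm, simp add: pl_perm)

lemma leafs4: assumes z: "\<forall>j<6. N 0 j = 0" and e: "[rw N 1, rw N 2, rw N 3, rw N 4, rw N 5] \<in> set (enum 4)"
  shows "Rel 4 h1i N"
proof -
  have "[rw N 1, rw N 2, rw N 3, rw N 4, rw N 5] \<in> set [[[0,0,1,2,2,3],[0,1,3,0,2,2],[0,2,1,3,0,2],[0,2,3,2,1,0],[0,3,2,1,3,1]],[[0,0,1,2,2,3],[0,1,3,1,3,2],[0,2,0,3,2,1],[0,2,2,0,1,3],[0,3,2,2,0,1]],[[0,0,1,2,2,3],[0,1,3,2,0,2],[0,2,1,0,3,2],[0,2,3,1,2,0],[0,3,2,3,1,1]],[[0,0,1,2,2,3],[0,1,3,3,1,2],[0,2,0,2,3,1],[0,2,2,1,0,3],[0,3,2,0,2,1]],[[0,1,1,2,3,3],[0,0,2,3,1,2],[0,2,0,3,2,1],[0,2,3,1,0,2],[0,3,2,1,2,0]],[[0,1,1,2,3,3],[0,0,2,3,2,1],[0,2,0,3,1,2],[0,2,3,1,2,0],[0,3,2,1,0,2]],[[0,1,1,2,3,3],[0,1,3,3,1,2],[0,2,3,1,3,1],[0,3,1,3,2,1],[0,3,2,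1,1,3]],[[0,1,1,2,3,3],[0,1,3,3,2,1],[0,2,3,1,1,3],[0,3,1,3,1,2],[0,3,2,1,3,1]]]"
    using enum4 e unfolding list_all_iff by blast
  then show ?thesis
    apply (simp only: set_simps insert_iff empty_iff list.inject simp_thms)
    apply (elim disjE conjE)
    subgoal using leaf4_0[of N] rw0[of N, OF z] by (simp add: all6)
    subgoal using leaf4_1[of N] rw0[of N, OF z] by (simp add: all6)
    subgoal using leaf4_2[of N] rw0[of N, OF z] by (simp add: all6)
    subgoal using leaf4_3[of N] rw0[of N, OF z] by (simp add: all6)
    subgoal using leaf4_4[of N] rw0[of N, OF z] by (simp add: all6)
    subgoal using leaf4_5[of N] rw0[of N, OF z] by (simp add: all6)
    subgoal using leaf4_6[of N] rw0[of N, OF z] by (simp add: all6)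
    subgoal using leaf4_7[of N] rw0[of N, OF z] by (simp add: all6)
    done
qed

theorem Z3: assumes "\<forall>i<6. \<forall>j<6. H i j = Ez omega3 3 (t i j)" "is_CHM 6 H"
  shows "complex_equiv 6 H S6_0"
  by (rule Zgen[OF omega3_pow3 _ omega3_norm chk3 assms leafs3 S6_Ez]) simp_all

theorem Z4: assumes "\<forall>i<6. \<forall>j<6. H i j = Ez \<i> 4 (t i j)" "is_CHM 6 H"
  shows "complex_equiv 6 H H1"
  by (rule Zgen[OF i_pow4 _ _ chk4 assms leafs4 H1_Ez]) simp_all

lemma Kcheck: "list_all (\<lambda>S1. list_all (\<lambda>S2. list_all (\<lambda>A. list_all (\<lambda>B::int.
   (S1 + S2 \<le> 5 \<and> \<bar>A\<bar> \<le> S1 \<and> \<bar>B\<bar> \<le> S2 \<and> B \<noteq> 0 \<and> \<bar>A\<bar> < 2 * \<bar>B\<bar> \<and>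
    4*B*B*(6 - S1 - S2) - 2*A*B*S1 + 2*A*A*S2 - 4*B*B*S2 = 0)
   \<longrightarrow> (A = 0 \<or> A = B \<or> A = -B \<or> B = -2*A)) [-5..5]) [-5..5]) [1..5]) [0..5::int]"
  by code_simp

lemma Kint:
  fixes C0 S1 S2 A B :: int
  assumes "C0 + S1 + S2 = 6" "C0 \<ge> 1" "S1 \<ge> 0" "S2 \<ge> 0" "\<bar>A\<bar> \<le> S1" "\<bar>B\<bar> \<le> S2" "B \<noteq> 0"
    "\<bar>A\<bar> < 2 * \<bar>B\<bar>" "4*B*B*C0 - 2*A*B*S1 + 2*A*A*S2 - 4*B*B*S2 = 0"
  shows "A = 0 \<or> A = B \<or> A = -B \<or> B = -2*A"
proof -
  have m: "S1 \<in> set [0..5]" "S2 \<in> set [1..5]" "A \<in> set [-5..5]" "B \<in> set [-5..5]"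
    using assms(1-8) by auto
  have C0: "C0 = 6 - S1 - S2" using assms(1) by simp
  have K: "\<forall>S1\<in>set [0..5]. \<forall>S2\<in>set [1..5]. \<forall>A\<in>set [-5..5]. \<forall>B::int\<in>set [-5..5].
   (S1 + S2 \<le> 5 \<and> \<bar>A\<bar> \<le> S1 \<and> \<bar>B\<bar> \<le> S2 \<and> B \<noteq> 0 \<and> \<bar>A\<bar> < 2 * \<bar>B\<bar> \<and>
    4*B*B*(6 - S1 - S2) - 2*A*B*S1 + 2*A*A*S2 - 4*B*B*S2 = 0)
   \<longrightarrow> (A = 0 \<or> A = B \<or> A = -B \<or> B = -2*A)"
    using Kcheck by (simp only: list_all_iff)
  then have "(S1 + S2 \<le> 5 \<and> \<bar>A\<bar> \<le> S1 \<and> \<bar>B\<bar> \<le> S2 \<and> B \<noteq> 0 \<and> \<bar>A\<bar> < 2 * \<bar>B\<bar> \<and>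
    4*B*B*(6 - S1 - S2) - 2*A*B*S1 + 2*A*A*S2 - 4*B*B*S2 = 0)
   \<longrightarrow> (A = 0 \<or> A = B \<or> A = -B \<or> B = -2*A)"
    using m by blast
  moreover have "S1 + S2 \<le> 5" using assms(1,2) by simp
  ultimately show ?thesis using assms(5-9) C0 by blast
qed

lemma P14:
  fixes C0 S1 S2 A B :: int
  assumes "C0 + S1 + S2 = 6" "C0 \<ge> 0" "S1 \<ge> 0" "S2 \<ge> 0" "\<bar>A\<bar> \<le> S1" "\<bar>B\<bar> \<le> S2"
    "even (A + S1)" "2 * A + B = 0" "8 * C0 + 2 * S1 = 7 * S2"
  shows "A + 2 * B = 3 \<or> A + 2 * B = -3"
proof -
  have e: "2*S1 + 5*S2 = 16" using assms(1,9) by linarith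
  have "S2 \<le> 3" using e assms(3) by linarith
  then have "S2 = 0 \<or> S2 = 1 \<or> S2 = 2 \<or> S2 = 3" using assms(4) by linarith
  then have S: "S2 = 2 \<and> S1 = 3"
  proof (elim disjE)
    assume "S2 = 0" then show ?thesis using e assms(1,2) by linarith
  next
    assume "S2 = 1" then have "2 * S1 = 11" using e by linarith
    then show ?thesis by presburger
  next
    assume "S2 = 2" then show ?thesis using e by linarith
  next
    assume "S2 = 3" then have "2 * S1 = 1" using e by linarith
    then show ?thesis by presburger
  qed
  then have "\<bar>A\<bar> \<le> 1" using assms(6,8) by linarith
  moreover have "odd A" using assms(7) S by simp
  ultimately have "A = 1 \<or> A = -1" by presburger
  then show ?thesis using assms(8) by auto
qed

definition vv :: "complex \<Rightarrow> nat \<Rightarrow> complex" where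
  "vv a x = (if x = 0 then 1 else if x = 1 then a else cnj a)"
definition feq :: "nat \<Rightarrow> nat \<Rightarrow> int" where "feq x y = (if x = y then 1 else 0)"
definition fone :: "nat \<Rightarrow> nat \<Rightarrow> int" where "fone x y = (if (x = 0) \<noteq> (y = 0) then 1 else 0)"
definition ftwo :: "nat \<Rightarrow> nat \<Rightarrow> int" where "ftwo x y = (if x \<noteq> y \<and> x \<noteq> 0 \<and> y \<noteq> 0 then 1 else 0)"
definition fal :: "nat \<Rightarrow> nat \<Rightarrow> int" where
  "fal x y = (if (x = 1 \<and> y = 0) \<or> (x = 0 \<and> y = 2) then 1 else if (x = 0 \<and> y = 1) \<or> (x = 2 \<and> y = 0) then -1 else 0)"
definition fbe :: "nat \<Rightarrow> nat \<Rightarrow> int" where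
  "fbe x y = (if x = 1 \<and> y = 2 then 1 else if x = 2 \<and> y = 1 then -1 else 0)"
definition fe :: "nat \<Rightarrow> int" where "fe x = (if x = 1 then 1 else if x = 2 then -1 else 0)"

lemmas fdefs = feq_def fone_def ftwo_def fal_def fbe_def fe_def

lemma three_cases: "x < (3::nat) \<Longrightarrow> x = 0 \<or> x = 1 \<or> x = 2" by arith

lemma pos_facts:
  assumes "x < 3" "y < 3"
  shows "feq x y + fone x y + ftwo x y = 1 \<and> \<bar>fal x y\<bar> \<le> fone x y \<and> \<bar>fbe x y\<bar> \<le> ftwo x y
    \<and> even (fal x y + fone x y) \<and> even (fbe x y + ftwo x y) \<and> fal x y + 2 * fbe x y = fe x - fe y
    \<and> fe x * fe y \<le> feq x y - ftwo x y \<and> fe x * fe x \<le> 1 \<and> 0 \<le> feq x y \<and> 0 \<le> fone x y \<and> 0 \<le> ftwo x y"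
  using three_cases[OF assms(1)] three_cases[OF assms(2)] by (auto simp: fdefs)

lemma pos_val:
  assumes "x < 3" "y < 3" "p^2 + q^2 = 1"
  shows "vv (Complex p q) x * cnj (vv (Complex p q) y)
       = Complex (of_int (feq x y) + p * of_int (fone x y) + (2*p^2-1) * of_int (ftwo x y))
                 (q * of_int (fal x y) + 2*p*q * of_int (fbe x y))"
proof -
  have qq: "q*q = 1 - p*p" using assms(3) by (simp add: power2_eq_square)
  show ?thesis
    using three_cases[OF assms(1)] three_cases[OF assms(2)]
    by (auto simp: fdefs vv_def complex_eq_iff power2_eq_square qq algebra_simps)
qed

lemma sum_pair_facts:
  fixes T :: "nat \<Rightarrow> nat \<Rightarrow> nat" and i j :: nat
  assumes T: "\<forall>k<6. T i k < 3 \<and> T j k < 3"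
  defines "C0 \<equiv> \<Sum>k<6. feq (T i k) (T j k)" and "S1 \<equiv> \<Sum>k<6. fone (T i k) (T j k)"
    and "S2 \<equiv> \<Sum>k<6. ftwo (T i k) (T j k)" and "A \<equiv> \<Sum>k<6. fal (T i k) (T j k)"
    and "B \<equiv> \<Sum>k<6. fbe (T i k) (T j k)"
  shows "C0 + S1 + S2 = 6 \<and> \<bar>A\<bar> \<le> S1 \<and> \<bar>B\<bar> \<le> S2 \<and> even (A + S1) \<and> even (B + S2)
    \<and> A + 2 * B = (\<Sum>k<6. fe (T i k)) - (\<Sum>k<6. fe (T j k))
    \<and> (\<Sum>k<6. fe (T i k) * fe (T j k)) \<le> C0 - S2 \<and> 0 \<le> C0 \<and> 0 \<le> S1 \<and> 0 \<le> S2"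
proof -
  have P: "\<And>k. k < 6 \<Longrightarrow> feq (T i k) (T j k) + fone (T i k) (T j k) + ftwo (T i k) (T j k) = 1 \<and> \<bar>fal (T i k) (T j k)\<bar> \<le> fone (T i k) (T j k) \<and> \<bar>fbe (T i k) (T j k)\<bar> \<le> ftwo (T i k) (T j k)
    \<and> even (fal (T i k) (T j k) + fone (T i k) (T j k)) \<and> even (fbe (T i k) (T j k) + ftwo (T i k) (T j k)) \<and> fal (T i k) (T j k) + 2 * fbe (T i k) (T j k) = fe (T i k) - fe (T j k)
    \<and> fe (T i k) * fe (T j k) \<le> feq (T i k) (T j k) - ftwo (T i k) (T j k) \<and> fe (T i k) * fe (T i k) \<le> 1 \<and> 0 \<le> feq (T i k) (T j k) \<and> 0 \<le> fone (T i k) (T j k) \<and> 0 \<le> ftwo (T i k) (T j k)"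
    using T pos_facts by blast
  have "C0 + S1 + S2 = (\<Sum>k<6. feq (T i k) (T j k) + fone (T i k) (T j k) + ftwo (T i k) (T j k))"
    unfolding C0_def S1_def S2_def by (simp add: sum.distrib)
  also have "\<dots> = (\<Sum>k<(6::nat). 1)" using P by (intro sum.cong) auto
  finally have 1: "C0 + S1 + S2 = 6" by simp
  have 2: "\<bar>A\<bar> \<le> S1" unfolding A_def S1_def
    by (rule order_trans[OF sum_abs]) (intro sum_mono, use P in auto)
  have 3: "\<bar>B\<bar> \<le> S2" unfolding B_def S2_def
    by (rule order_trans[OF sum_abs]) (intro sum_mono, use P in auto)
  have 4: "even (A + S1)" unfolding A_def S1_def sum.distrib[symmetric]
    by (rule dvd_sum) (use P in auto)
  have 5: "even (B + S2)" unfolding B_def S2_def sum.distrib[symmetric]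
    by (rule dvd_sum) (use P in auto)
  have "A + 2 * B = (\<Sum>k<6. fal (T i k) (T j k) + 2 * fbe (T i k) (T j k))"
    unfolding A_def B_def by (simp add: sum.distrib sum_distrib_left)
  also have "\<dots> = (\<Sum>k<6. fe (T i k) - fe (T j k))" using P by (intro sum.cong) auto
  finally have 6: "A + 2 * B = (\<Sum>k<6. fe (T i k)) - (\<Sum>k<6. fe (T j k))" by (simp add: sum_subtractf)
  have "(\<Sum>k<6. fe (T i k) * fe (T j k)) \<le> (\<Sum>k<6. feq (T i k) (T j k) - ftwo (T i k) (T j k))"
    by (intro sum_mono) (use P in auto)
  then have 7: "(\<Sum>k<6. fe (T i k) * fe (T j k)) \<le> C0 - S2" unfolding C0_def S2_def by (simp add: sum_subtractf)
  have 8: "0 \<le> C0" "0 \<le> S1" "0 \<le> S2" unfolding C0_def S1_def S2_def by (intro sum_nonneg; use P in auto)+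
  show ?thesis using 1 2 3 4 5 6 7 8 by blast
qed

lemma pair_eqs:
  fixes T :: "nat \<Rightarrow> nat \<Rightarrow> nat"
  assumes T: "\<forall>k<6. T i k < 3 \<and> T j k < 3" and pq: "p^2 + q^2 = 1"
    and H: "\<forall>k<6. H i k = vv (Complex p q) (T i k) \<and> H j k = vv (Complex p q) (T j k)"
    and o: "(\<Sum>k<6. H i k * cnj (H j k)) = 0"
  shows "of_int (\<Sum>k<6. feq (T i k) (T j k)) + p * of_int (\<Sum>k<6. fone (T i k) (T j k))
           + (2*p^2-1) * of_int (\<Sum>k<6. ftwo (T i k) (T j k)) = 0
       \<and> q * (of_int (\<Sum>k<6. fal (T i k) (T j k)) + 2 * p * of_int (\<Sum>k<6. fbe (T i k) (T j k))) = 0"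
proof -
  have e: "\<And>k. k < 6 \<Longrightarrow> H i k * cnj (H j k) = Complex (of_int (feq (T i k) (T j k)) + p * of_int (fone (T i k) (T j k)) + (2*p^2-1) * of_int (ftwo (T i k) (T j k)))
                 (q * of_int (fal (T i k) (T j k)) + 2*p*q * of_int (fbe (T i k) (T j k)))"
    using H T pos_val pq by simp
  have "Re (\<Sum>k<6. H i k * cnj (H j k)) = 0" "Im (\<Sum>k<6. H i k * cnj (H j k)) = 0" using o by simp_all
  then have r: "(\<Sum>k<6. of_int (feq (T i k) (T j k)) + p * of_int (fone (T i k) (T j k)) + (2*p^2-1) * of_int (ftwo (T i k) (T j k))) = 0"
    and im: "(\<Sum>k<6. q * of_int (fal (T i k) (T j k)) + 2*p*q * of_int (fbe (T i k) (T j k))) = 0"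
    using e by (simp_all add: Re_sum Im_sum)
  have r2: "(\<Sum>k<6. of_int (feq (T i k) (T j k)) + p * of_int (fone (T i k) (T j k)) + (2*p^2-1) * of_int (ftwo (T i k) (T j k)))
     = (\<Sum>k<6. of_int (feq (T i k) (T j k))) + p * (\<Sum>k<6. of_int (fone (T i k) (T j k))) + (2*p^2-1) * (\<Sum>k<6. of_int (ftwo (T i k) (T j k)) :: real)"
    by (simp add: sum.distrib sum_distrib_left)
  have i2: "(\<Sum>k<6. q * of_int (fal (T i k) (T j k)) + 2*p*q * of_int (fbe (T i k) (T j k)))
     = q * ((\<Sum>k<6. of_int (fal (T i k) (T j k))) + 2 * p * (\<Sum>k<6. of_int (fbe (T i k) (T j k)) :: real))"
    by (simp add: sum.distrib sum_distrib_left algebra_simps)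
  show ?thesis using r im r2 i2 by (simp only: of_int_sum)
qed

lemma p_cases:
  fixes p q :: real and C0 S1 S2 A B :: int
  assumes q: "q \<noteq> 0" and pq: "p^2 + q^2 = 1" and s: "C0 + S1 + S2 = 6" "C0 \<ge> 1" "S1 \<ge> 0" "S2 \<ge> 0"
    and ab: "\<bar>A\<bar> \<le> S1" "\<bar>B\<bar> \<le> S2" "even (A + S1)" "even (B + S2)"
    and R: "of_int C0 + p * of_int S1 + (2*p^2 - 1) * of_int S2 = 0" and I: "of_int A + 2 * p * of_int B = 0"
  shows "p = 0 \<or> p = 1/2 \<or> p = -1/2 \<or> p = 1/4"
proof -
  have "q^2 > 0" using q by simp
  then have p1: "p^2 < 1" using pq by linarith
  have C0: "C0 = 6 - S1 - S2" using s(1) by simp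
  show ?thesis
  proof (cases "B = 0")
    case True
    then have A0: "A = 0" using I by simp
    then have ev: "even S1" "even S2" using ab True by simp_all
    have "S1 = 0 \<or> S1 = 2 \<or> S1 = 4" using ev(1) s by presburger
    moreover have "S2 = 0 \<or> S2 = 2 \<or> S2 = 4" using ev(2) s by presburger
    ultimately show ?thesis
    proof (elim disjE)
      assume "S1 = 0" "S2 = 0" then show ?thesis using R C0 by simp
    next
      assume "S1 = 0" "S2 = 2"
      then have "4 + 2 * (2 * p^2 - 1) = 0" using R C0 by simp
      then have "4 * p^2 + 2 = 0" by (simp add: algebra_simps)
      moreover have "p^2 \<ge> 0" by simp
      ultimately have False by linarith
      then show ?thesis ..
    next
      assume "S1 = 0" "S2 = 4"
      then have "2 + 4 * (2 * p^2 - 1) = 0" using R C0 by simp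
      then have "(p - 1/2) * (p + 1/2) = 0" by (simp add: power2_eq_square algebra_simps)
      then show ?thesis by auto
    next
      assume "S1 = 2" "S2 = 0"
      then have "4 + 2 * p = 0" using R C0 by simp
      then have "p = -2" by simp
      then show ?thesis using p1 by simp
    next
      assume "S1 = 2" "S2 = 2"
      then have "2 + 2 * p + 2 * (2 * p^2 - 1) = 0" using R C0 by simp
      then have "p * (2 * p + 1) = 0" by (simp add: power2_eq_square algebra_simps)
      then show ?thesis by auto
    next
      assume "S1 = 4" "S2 = 0"
      then have "2 + 4 * p = 0" using R C0 by simp
      then show ?thesis by simp
    qed (use s in simp_all)
  next
    case False
    define b where "b = (of_int B :: real)"
    define x where "x = (of_int A :: real)"
    have b0: "b \<noteq> 0" using False unfolding b_def by simp
    have xA: "x = -2 * p * b" using I unfolding x_def b_def by simp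
    have ap: "\<bar>p\<bar> < 1" using p1 by (simp add: abs_square_less_1)
    have "\<bar>x\<bar> = 2 * \<bar>p\<bar> * \<bar>b\<bar>" using xA by (simp add: abs_mult)
    also have "\<dots> < 2 * \<bar>b\<bar>" using ap b0 by simp
    finally have "\<bar>x\<bar> < 2 * \<bar>b\<bar>" .
    then have lt: "\<bar>A\<bar> < 2 * \<bar>B\<bar>" unfolding x_def b_def by linarith
    have "of_int (4*B*B*C0 - 2*A*B*S1 + 2*A*A*S2 - 4*B*B*S2)
        = 4 * b^2 * (of_int C0 + p * of_int S1 + (2*p^2-1) * of_int S2)"
      using xA unfolding x_def[symmetric] b_def[symmetric]
      by (simp add: x_def[symmetric] b_def[symmetric] power2_eq_square algebra_simps)
    also have "\<dots> = 0" using R by simp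
    finally have eq: "4*B*B*C0 - 2*A*B*S1 + 2*A*A*S2 - 4*B*B*S2 = 0" by (simp only: of_int_eq_0_iff)
    have "A = 0 \<or> A = B \<or> A = -B \<or> B = -2*A"
      by (rule Kint[OF s ab(1,2) False lt eq])
    then show ?thesis
    proof (elim disjE)
      assume "A = 0" then show ?thesis using xA b0 unfolding x_def by simp
    next
      assume "A = B" then have "x = b" unfolding x_def b_def by simp
      then have "b * (2 * p + 1) = 0" using xA by (simp add: algebra_simps)
      then show ?thesis using b0 by simp
    next
      assume "A = -B" then have "x = -b" unfolding x_def b_def by simp
      then have "b * (2 * p - 1) = 0" using xA by (simp add: algebra_simps)
      then show ?thesis using b0 by simp
    next
      assume "B = -2*A" then have "b = -2 * x" unfolding x_def b_def by simp
      then have "b * (4 * p - 1) = 0" using xA by (simp add: algebra_simps)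
      then show ?thesis using b0 by simp
    qed
  qed
qed

lemma sign_trick:
  fixes T :: "nat \<Rightarrow> nat \<Rightarrow> nat"
  assumes T: "\<forall>i<6. \<forall>j<6. T i j < 3"
    and G: "\<And>i j. i < 6 \<Longrightarrow> j < 6 \<Longrightarrow> i \<noteq> j \<Longrightarrow> (\<Sum>k<6. fe (T i k) * fe (T j k)) \<le> -2"
  shows False
proof -
  have "0 \<le> (\<Sum>k<6. (\<Sum>i<6. fe (T i k))^2)" by (simp add: sum_nonneg)
  also have "\<dots> = (\<Sum>k<6. \<Sum>i<6. \<Sum>j<6. fe (T i k) * fe (T j k))"
    by (simp add: power2_eq_square sum_product)
  also have "\<dots> = (\<Sum>i<6. \<Sum>k<6. \<Sum>j<6. fe (T i k) * fe (T j k))"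
    by (rule sum.swap)
  also have "\<dots> = (\<Sum>i<6. \<Sum>j<6. \<Sum>k<6. fe (T i k) * fe (T j k))"
    by (rule sum.cong[OF refl]) (rule sum.swap)
  also have "\<dots> \<le> (\<Sum>i<(6::nat). \<Sum>j<(6::nat). -2 + (if j = i then 8 else 0))"
  proof (intro sum_mono)
    fix i j :: nat assume i: "i \<in> {..<6}" and j: "j \<in> {..<6}"
    show "(\<Sum>k<6. fe (T i k) * fe (T j k)) \<le> -2 + (if j = i then 8 else 0)"
    proof (cases "j = i")
      case True
      have "(\<Sum>k<6. fe (T i k) * fe (T i k)) \<le> (\<Sum>k<(6::nat). 1)"
        by (intro sum_mono) (use T i pos_facts in blast)
      then show ?thesis using True by simp
    next
      case False then show ?thesis using G i j by simp
    qed
  qed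
  also have "\<dots> = (\<Sum>i<(6::nat). -4)"
  proof (rule sum.cong[OF refl])
    fix i :: nat assume "i \<in> {..<6}"
    then have "(\<Sum>j<(6::nat). (if j = i then 8 else 0)) = (8::int)" by (simp add: sum.delta)
    then show "(\<Sum>j<(6::nat). -2 + (if j = i then 8 else 0)) = (-4::int)"
      by (simp only: sum.distrib) simp
  qed
  also have "\<dots> = -24" by simp
  finally show False by simp
qed

definition sC0 :: "(nat \<Rightarrow> nat \<Rightarrow> nat) \<Rightarrow> nat \<Rightarrow> nat \<Rightarrow> int" where "sC0 T i j = (\<Sum>k<6. feq (T i k) (T j k))"
definition sS1 :: "(nat \<Rightarrow> nat \<Rightarrow> nat) \<Rightarrow> nat \<Rightarrow> nat \<Rightarrow> int" where "sS1 T i j = (\<Sum>k<6. fone (T i k) (T j k))"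
definition sS2 :: "(nat \<Rightarrow> nat \<Rightarrow> nat) \<Rightarrow> nat \<Rightarrow> nat \<Rightarrow> int" where "sS2 T i j = (\<Sum>k<6. ftwo (T i k) (T j k))"
definition sA :: "(nat \<Rightarrow> nat \<Rightarrow> nat) \<Rightarrow> nat \<Rightarrow> nat \<Rightarrow> int" where "sA T i j = (\<Sum>k<6. fal (T i k) (T j k))"
definition sB :: "(nat \<Rightarrow> nat \<Rightarrow> nat) \<Rightarrow> nat \<Rightarrow> nat \<Rightarrow> int" where "sB T i j = (\<Sum>k<6. fbe (T i k) (T j k))"
definition sE :: "(nat \<Rightarrow> nat \<Rightarrow> nat) \<Rightarrow> nat \<Rightarrow> int" where "sE T i = (\<Sum>k<6. fe (T i k))"
definition sG :: "(nat \<Rightarrow> nat \<Rightarrow> nat) \<Rightarrow> nat \<Rightarrow> nat \<Rightarrow> int" where "sG T i j = (\<Sum>k<6. fe (T i k) * fe (T j k))"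

lemma pairinfo:
  fixes T :: "nat \<Rightarrow> nat \<Rightarrow> nat"
  assumes T3: "\<forall>i<6. \<forall>j<6. T i j < 3" and HT: "\<forall>i<6. \<forall>j<6. H i j = vv (Complex p q) (T i j)"
    and pq: "p^2 + q^2 = 1" and q: "q \<noteq> 0" and o: "(\<Sum>k<6. H i k * cnj (H j k)) = 0"
    and ij: "i < 6" "j < 6"
  shows "sC0 T i j + sS1 T i j + sS2 T i j = 6 \<and> \<bar>sA T i j\<bar> \<le> sS1 T i j \<and> \<bar>sB T i j\<bar> \<le> sS2 T i j
    \<and> even (sA T i j + sS1 T i j) \<and> even (sB T i j + sS2 T i j) \<and> sA T i j + 2 * sB T i j = sE T i - sE T j
    \<and> sG T i j \<le> sC0 T i j - sS2 T i j \<and> 0 \<le> sC0 T i j \<and> 0 \<le> sS1 T i j \<and> 0 \<le> sS2 T i j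
    \<and> of_int (sC0 T i j) + p * of_int (sS1 T i j) + (2*p^2-1) * of_int (sS2 T i j) = 0
    \<and> of_int (sA T i j) + 2 * p * of_int (sB T i j) = 0"
proof -
  have Tk: "\<forall>k<6. T i k < 3 \<and> T j k < 3" using T3 ij by simp
  have Hk: "\<forall>k<6. H i k = vv (Complex p q) (T i k) \<and> H j k = vv (Complex p q) (T j k)" using HT ij by simp
  note F = sum_pair_facts[OF Tk]
  note G = pair_eqs[OF Tk pq Hk o]
  have "q * (of_int (sA T i j) + 2 * p * of_int (sB T i j)) = 0" using G unfolding sA_def sB_def by simp
  then have "of_int (sA T i j) + 2 * p * of_int (sB T i j) = 0" using q by simp
  then show ?thesis using F G unfolding sC0_def sS1_def sS2_def sA_def sB_def sE_def sG_def by simp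
qed

lemma no_real:
  fixes H :: "nat \<Rightarrow> nat \<Rightarrow> complex"
  assumes V: "\<forall>k<6. (H 0 k = 1 \<or> H 0 k = -1) \<and> (H 1 k = 1 \<or> H 1 k = -1) \<and> (H 2 k = (1::complex) \<or> H 2 k = -1)"
    and o10: "(\<Sum>k<6. H 1 k * cnj (H 0 k)) = 0" and o02: "(\<Sum>k<6. H 0 k * cnj (H 2 k)) = 0"
    and o12: "(\<Sum>k<6. H 1 k * cnj (H 2 k)) = 0" and d0: "(\<Sum>k<6. H 0 k * cnj (H 0 k)) = 6"
  shows False
proof -
  define n where "n = (\<lambda>k. if H 0 k = H 1 k \<and> H 0 k = H 2 k then 1 else (0::nat))"
  have f: "\<And>k. k < 6 \<Longrightarrow> (H 0 k + H 1 k) * (cnj (H 0 k) + cnj (H 2 k)) = 4 * of_nat (n k)"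
  proof -
    fix k :: nat assume "k < 6"
    then have "(H 0 k = 1 \<or> H 0 k = -1) \<and> (H 1 k = 1 \<or> H 1 k = -1) \<and> (H 2 k = 1 \<or> H 2 k = -1)" using V by simp
    then show "(H 0 k + H 1 k) * (cnj (H 0 k) + cnj (H 2 k)) = 4 * of_nat (n k)"
      unfolding n_def by (elim conjE disjE) simp_all
  qed
  have "(\<Sum>k<6. (H 0 k + H 1 k) * (cnj (H 0 k) + cnj (H 2 k)))
      = (\<Sum>k<6. H 0 k * cnj (H 0 k)) + (\<Sum>k<6. H 0 k * cnj (H 2 k)) + (\<Sum>k<6. H 1 k * cnj (H 0 k)) + (\<Sum>k<6. H 1 k * cnj (H 2 k))"
    by (simp add: algebra_simps sum.distrib)
  also have "\<dots> = 6" using o10 o02 o12 d0 by simp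
  finally have "(\<Sum>k<6. 4 * (of_nat (n k) :: complex)) = 6" using f by simp
  then have "of_nat (4 * (\<Sum>k<6. n k)) = (of_nat 6 :: complex)" by (simp add: sum_distrib_left)
  then have "4 * (\<Sum>k<6. n k) = 6" by (simp only: of_nat_eq_iff)
  then show False by presburger
qed

lemma pig: "x0 < 3 \<Longrightarrow> x1 < 3 \<Longrightarrow> x2 < 3 \<Longrightarrow> x3 < (3::nat) \<Longrightarrow>
   x0 = x1 \<or> x0 = x2 \<or> x0 = x3 \<or> x1 = x2 \<or> x1 = x3 \<or> x2 = x3"
  by (auto dest!: three_cases)

theorem mainTheorem8:
  fixes a :: complex and H :: "nat \<Rightarrow> nat \<Rightarrow> complex"
  assumes "cmod a = 1"
    and "is_CHM 6 H"
    and "\<forall>i<6. \<forall>j<6. H i j \<in> {1, a, cnj a}"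
  shows "complex_equiv 6 H S6_0 \<or> complex_equiv 6 H H1"
proof -
  note ca = assms(1) and C = assms(2) and E = assms(3)
  obtain p q where a: "a = Complex p q" by (cases a)
  have "sqrt (p^2 + q^2) = 1" using ca a by (simp add: complex_norm)
  then have pq: "p^2 + q^2 = 1" by simp
  have orth: "\<And>i j. i < 6 \<Longrightarrow> j < 6 \<Longrightarrow> i \<noteq> j \<Longrightarrow> (\<Sum>k<6. H i k * cnj (H j k)) = 0"
    using C unfolding is_CHM_def by auto
  have diag: "\<And>i. i < 6 \<Longrightarrow> (\<Sum>k<6. H i k * cnj (H i k)) = 6"
    using C unfolding is_CHM_def by auto
  show ?thesis
  proof (cases "q = 0")
    case True
    then have "p^2 = 1" using pq by simp
    then have "p = 1 \<or> p = -1" by (simp add: power2_eq_1_iff)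
    then show ?thesis
    proof
      assume "p = 1" then have "a = 1" using a True by (simp add: complex_eq_iff)
      then have "\<forall>k<6. H 0 k = 1 \<and> H 1 k = 1" using E by simp
      then have "(\<Sum>k<6. H 0 k * cnj (H 1 k)) = 6" by simp
      then show ?thesis using orth[of 0 1] by simp
    next
      assume "p = -1" then have "a = -1" using a True by (simp add: complex_eq_iff)
      then have V: "\<forall>k<6. (H 0 k = 1 \<or> H 0 k = -1) \<and> (H 1 k = 1 \<or> H 1 k = -1) \<and> (H 2 k = 1 \<or> H 2 k = -1)"
        using E by auto
      have False by (rule no_real[OF V orth[of 1 0] orth[of 0 2] orth[of 1 2] diag[of 0]]) simp_all
      then show ?thesis ..
    qed
  next
    case False
    define T where "T = (\<lambda>i j. if H i j = 1 then 0 else if H i j = a then 1 else (2::nat))"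
    have T3: "\<forall>i<6. \<forall>j<6. T i j < 3" unfolding T_def by simp
    have HT: "\<forall>i<6. \<forall>j<6. H i j = vv (Complex p q) (T i j)"
      using E unfolding T_def vv_def a[symmetric] by auto
    note PI = pairinfo[OF T3 HT pq False orth]
    have "\<exists>i j. i < 6 \<and> j < 6 \<and> i \<noteq> j \<and> T i 0 = T j 0"
    proof -
      have "T 0 0 = T 1 0 \<or> T 0 0 = T 2 0 \<or> T 0 0 = T 3 0 \<or> T 1 0 = T 2 0 \<or> T 1 0 = T 3 0 \<or> T 2 0 = T 3 0"
        using T3 by (intro pig) simp_all
      then show ?thesis
      proof (elim disjE)
        assume "T 0 0 = T 1 0" then show ?thesis by (intro exI[of _ 0] exI[of _ 1]) simp
      next
        assume "T 0 0 = T 2 0" then show ?thesis by (intro exI[of _ 0] exI[of _ 2]) simp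
      next
        assume "T 0 0 = T 3 0" then show ?thesis by (intro exI[of _ 0] exI[of _ 3]) simp
      next
        assume "T 1 0 = T 2 0" then show ?thesis by (intro exI[of _ 1] exI[of _ 2]) simp
      next
        assume "T 1 0 = T 3 0" then show ?thesis by (intro exI[of _ 1] exI[of _ 3]) simp
      next
        assume "T 2 0 = T 3 0" then show ?thesis by (intro exI[of _ 2] exI[of _ 3]) simp
      qed
    qed
    then obtain i0 j0 where ij0: "i0 < 6" "j0 < 6" "i0 \<noteq> j0" "T i0 0 = T j0 0" by blast
    have "feq (T i0 0) (T j0 0) \<le> sC0 T i0 j0"
      unfolding sC0_def by (rule member_le_sum) (auto simp: feq_def)
    then have c1: "sC0 T i0 j0 \<ge> 1" using ij0(4) by (simp add: feq_def)
    note P0 = PI[OF ij0(1,2,3) ij0(1,2)]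
    have "p = 0 \<or> p = 1/2 \<or> p = -1/2 \<or> p = 1/4"
      by (rule p_cases[OF False pq, of "sC0 T i0 j0" "sS1 T i0 j0" "sS2 T i0 j0" "sA T i0 j0" "sB T i0 j0"])
         (use P0 c1 in simp_all)
    then show ?thesis
    proof (elim disjE)
      assume p: "p = 1/4"
      have D: "\<And>i j. i < 6 \<Longrightarrow> j < 6 \<Longrightarrow> i \<noteq> j \<Longrightarrow> sE T i - sE T j = 3 \<or> sE T i - sE T j = -3"
      proof -
        fix i j :: nat assume i: "i < 6" and j: "j < 6" and ij: "i \<noteq> j"
        note P = PI[OF i j ij i j]
        have "of_int (sA T i j) + 1/2 * of_int (sB T i j) = (0::real)" using P p by simp
        then have "of_int (2 * sA T i j + sB T i j) = (0::real)" by simp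
        then have e1: "2 * sA T i j + sB T i j = 0" by (simp only: of_int_eq_0_iff)
        have "of_int (sC0 T i j) + 1/4 * of_int (sS1 T i j) + (2*(1/4)^2-1) * of_int (sS2 T i j) = (0::real)"
          using P p by simp
        then have "of_int (8 * sC0 T i j + 2 * sS1 T i j - 7 * sS2 T i j) = (0::real)"
          by (simp add: power2_eq_square algebra_simps)
        then have e2: "8 * sC0 T i j + 2 * sS1 T i j = 7 * sS2 T i j" by (simp only: of_int_eq_0_iff)
        have "sA T i j + 2 * sB T i j = 3 \<or> sA T i j + 2 * sB T i j = -3"
          by (rule P14) (use P e1 e2 in simp_all)
        then show "sE T i - sE T j = 3 \<or> sE T i - sE T j = -3" using P by simp
      qed
      have "sE T 0 - sE T 1 = 3 \<or> sE T 0 - sE T 1 = -3" "sE T 1 - sE T 2 = 3 \<or> sE T 1 - sE T 2 = -3"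
           "sE T 0 - sE T 2 = 3 \<or> sE T 0 - sE T 2 = -3" using D by simp_all
      then have False by linarith
      then show ?thesis ..
    next
      assume p: "p = 1/2"
      have False
      proof (rule sign_trick[OF T3])
        fix i j :: nat assume i: "i < 6" and j: "j < 6" and ij: "i \<noteq> j"
        note P = PI[OF i j ij i j]
        have "of_int (sC0 T i j) + 1/2 * of_int (sS1 T i j) + (2*(1/2)^2-1) * of_int (sS2 T i j) = (0::real)"
          using P p by simp
        then have "of_int (2 * sC0 T i j + sS1 T i j - sS2 T i j) = (0::real)"
          by (simp add: power2_eq_square algebra_simps)
        then have e: "2 * sC0 T i j + sS1 T i j = sS2 T i j" by (simp only: of_int_eq_0_iff)
        have "sG T i j \<le> -2" using P e by linarith
        then show "(\<Sum>k<6. fe (T i k) * fe (T j k)) \<le> -2" unfolding sG_def .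
      qed
      then show ?thesis ..
    next
      assume p: "p = 0"
      then have "q^2 = 1" using pq by simp
      then have "q = 1 \<or> q = -1" by (simp add: power2_eq_1_iff)
      then have ai: "a = \<i> \<or> a = - \<i>" using a p by (auto simp: complex_eq_iff)
      define t where "t = (\<lambda>i j. if H i j = 1 then 0 else if H i j = \<i> then 1 else (3::int))"
      have "\<forall>i<6. \<forall>j<6. H i j = Ez \<i> 4 (t i j)"
      proof (intro allI impI)
        fix i j :: nat assume "i < 6" "j < 6"
        then have "H i j \<in> {1, a, cnj a}" using E by blast
        then have "H i j \<in> {1, \<i>, - \<i>}" using ai by auto
        then show "H i j = Ez \<i> 4 (t i j)" unfolding t_def Ez_def by (auto simp: power_numeral_reduce)
      qed
      then have "complex_equiv 6 H H1" using Z4 C by blast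
      then show ?thesis ..
    next
      assume p: "p = -1/2"
      then have "q^2 = 3/4" using pq by (simp add: power2_eq_square)
      then have "(q - sqrt 3 / 2) * (q + sqrt 3 / 2) = 0" by (simp add: power2_eq_square algebra_simps)
      then have "q = sqrt 3 / 2 \<or> q = - sqrt 3 / 2" by auto
      then have aw: "a = omega3 \<or> a = cnj omega3" using a p by (auto simp: complex_eq_iff omega3_Re omega3_Im)
      have w2: "omega3 ^ 2 = cnj omega3" by (simp add: omega3_sq complex_eq_iff omega3_Re omega3_Im)
      define t where "t = (\<lambda>i j. if H i j = 1 then 0 else if H i j = omega3 then 1 else (2::int))"
      have "\<forall>i<6. \<forall>j<6. H i j = Ez omega3 3 (t i j)"
      proof (intro allI impI)
        fix i j :: nat assume "i < 6" "j < 6"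
        then have "H i j \<in> {1, a, cnj a}" using E by blast
        then have "H i j \<in> {1, omega3, cnj omega3}" using aw by auto
        then show "H i j = Ez omega3 3 (t i j)" unfolding t_def Ez_def using w2 by auto
      qed
      then have "complex_equiv 6 H S6_0" using Z3 C by blast
      then show ?thesis ..
    qed
  qed
qed

end
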